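(* Let $d\ge1$ and let $\zeta=\{\zeta_k\}_{k\in\mathbb{Z}^d}$ be a stationary random field with $\mathrm{E}(\zeta_0)=0$, $\mathrm{Var}(\zeta_0)<\infty$ and $\sum_{k\in\mathbb{Z}^d}|\mathrm{Cov}(\zeta_0,\zeta_k)|<\infty$; set $\sigma^2:=\sum_{k\in\mathbb{Z}^d}\mathrm{Cov}(\zeta_0,\zeta_k)$. Let $\mathscr{D}$ be a subset of $\mathscr{C}$ that is dense in $\mathscr{C}$ with respect to the $L^2(\mathbb{R}^d)$ norm, and suppose that $S_n(\psi)$ converges in distribution to $\sigma W(\psi)$ as $n\to\infty$ for every $\psi\in\mathscr{D}$. Then the finite-dimensional distributions of $\{S_n(\varphi);\varphi\in\mathscr{C}\}$ converge weakly to those of $\{\sigma W(\varphi);\varphi\in\mathscr{C}\}$ as $n\to\infty$.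
   Context: $\mathscr{C}$ is the class of piecewise-continuous functions $\varphi:\mathbb{R}^d\to\mathbb{R}$ with compact support (continuous except on finitely many hyperplanes). For $\varphi\in\mathscr{C}$ and $n\in\mathbb{N}$, $S_n(\varphi):=n^{-d/2}\sum_{k\in\mathbb{Z}^d}\zeta_k\varphi(k/n)$. $W=\{W(\varphi);\varphi\in L^2(\mathbb{R}^d)\}$ is the isonormal Gaussian process of white noise on $\mathbb{R}^d$: a centered Gaussian process with $\mathrm{Cov}[W(\varphi_1),W(\varphi_2)]=\langle\varphi_1,\varphi_2\rangle_{L^2(\mathbb{R}^d)}$. *)

theory Defs
  imports "HOL-Probability.Probability"
begin

definition hyperplane :: "'a::euclidean_space set \<Rightarrow> bool" where
  "hyperplane H \<longleftrightarrow> (\<exists>a b. a \<noteq> 0 \<and> H = {x. a \<bullet> x = b})"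

definition pwC :: "('a::euclidean_space \<Rightarrow> real) set" where
  "pwC = {\<phi>. (\<exists>\<H>. finite \<H> \<and> (\<forall>H\<in>\<H>. hyperplane H) \<and> (\<forall>x. x \<notin> \<Union>\<H> \<longrightarrow> isCont \<phi> x))
             \<and> bounded (range \<phi>) \<and> bounded {x. \<phi> x \<noteq> 0}}"

definition L2 :: "('a::euclidean_space \<Rightarrow> real) set" where
  "L2 = {\<phi>. \<phi> \<in> borel_measurable lebesgue \<and> integrable lebesgue (\<lambda>x. (\<phi> x)\<^sup>2)}"

definition L2_inner :: "('a::euclidean_space \<Rightarrow> real) \<Rightarrow> ('a \<Rightarrow> real) \<Rightarrow> real" where
  "L2_inner \<phi> \<psi> = integral\<^sup>L lebesgue (\<lambda>x. \<phi> x * \<psi> x)"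

definition L2_dist :: "('a::euclidean_space \<Rightarrow> real) \<Rightarrow> ('a \<Rightarrow> real) \<Rightarrow> real" where
  "L2_dist \<phi> \<psi> = sqrt (integral\<^sup>L lebesgue (\<lambda>x. (\<phi> x - \<psi> x)\<^sup>2))"

definition L2_dense_in :: "('a::euclidean_space \<Rightarrow> real) set \<Rightarrow> ('a \<Rightarrow> real) set \<Rightarrow> bool" where
  "L2_dense_in D C \<longleftrightarrow> D \<subseteq> C \<and> (\<forall>\<phi>\<in>C. \<forall>e>0. \<exists>\<psi>\<in>D. L2_dist \<phi> \<psi> < e)"

definition centered_gaussian :: "real \<Rightarrow> real measure" where
  "centered_gaussian v =
     (if v = 0 then return borel 0 else density lborel (normal_density 0 (sqrt v)))"

text \<open>Isonormal Gaussian process of white noise on the Euclidean space 'd, defined on the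
  probability space N: a centered Gaussian process indexed by L2 with covariance the L2 inner
  product (joint Gaussianity = every finite linear combination is centered Gaussian with the
  corresponding variance).\<close>
definition isonormal :: "'w measure \<Rightarrow> (('d::euclidean_space \<Rightarrow> real) \<Rightarrow> 'w \<Rightarrow> real) \<Rightarrow> bool" where
  "isonormal N W \<longleftrightarrow> prob_space N \<and> (\<forall>\<phi>\<in>L2. W \<phi> \<in> borel_measurable N) \<and>
     (\<forall>F c. finite F \<and> F \<subseteq> L2 \<longrightarrow>
        distr N borel (\<lambda>\<omega>. \<Sum>\<phi>\<in>F. c \<phi> * W \<phi> \<omega>)
          = centered_gaussian (\<Sum>\<phi>\<in>F. \<Sum>\<psi>\<in>F. c \<phi> * c \<psi> * L2_inner \<phi> \<psi>))"

definition stationary_field :: "'a measure \<Rightarrow> ('i::ab_group_add \<Rightarrow> 'a \<Rightarrow> real) \<Rightarrow> bool" where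
  "stationary_field M \<zeta> \<longleftrightarrow> (\<forall>h K. finite K \<longrightarrow>
      distr M (PiM K (\<lambda>_. borel)) (\<lambda>\<omega>. \<lambda>k\<in>K. \<zeta> (k + h) \<omega>)
        = distr M (PiM K (\<lambda>_. borel)) (\<lambda>\<omega>. \<lambda>k\<in>K. \<zeta> k \<omega>))"

definition covariance :: "'a measure \<Rightarrow> ('a \<Rightarrow> real) \<Rightarrow> ('a \<Rightarrow> real) \<Rightarrow> real" where
  "covariance M X Y = integral\<^sup>L M (\<lambda>\<omega>. (X \<omega> - integral\<^sup>L M X) * (Y \<omega> - integral\<^sup>L M Y))"

definition lattice_pt :: "nat \<Rightarrow> int^'d \<Rightarrow> real^'d" where
  "lattice_pt n k = (\<chi> i. real_of_int (k $ i) / real n)"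

text \<open>S_n(phi) = n^(-d/2) * sum_k zeta_k phi(k/n); the sum has finitely many nonzero terms
  for phi in C.\<close>
definition S :: "(int^'d \<Rightarrow> 'a \<Rightarrow> real) \<Rightarrow> nat \<Rightarrow> (real^'d \<Rightarrow> real) \<Rightarrow> 'a \<Rightarrow> real" where
  "S \<zeta> n \<phi> \<omega> = real n powr (- real CARD('d) / 2) *
      (\<Sum>k | \<phi> (lattice_pt n k) \<noteq> 0. \<zeta> k \<omega> * \<phi> (lattice_pt n k))"

definition conv_distr :: "(nat \<Rightarrow> 'b::topological_space measure) \<Rightarrow> 'b measure \<Rightarrow> bool" where
  "conv_distr \<mu>s \<mu> \<longleftrightarrow> (\<forall>f::'b \<Rightarrow> real. continuous_on UNIV f \<and> bounded (range f) \<longrightarrow>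
      (\<lambda>n. integral\<^sup>L (\<mu>s n) f) \<longlonglongrightarrow> integral\<^sup>L \<mu> f)"

end

theory Submission
  imports Defs
begin

section \<open>Trigonometric polynomials on real^'m\<close>

definition tsum :: "((real^'m) \<times> complex) list \<Rightarrow> real^'m \<Rightarrow> complex" where
  "tsum L x = (\<Sum>p\<leftarrow>L. snd p * cis (fst p \<bullet> x))"

definition trigrep :: "(real^'m \<Rightarrow> real) \<Rightarrow> bool" where
  "trigrep h \<longleftrightarrow> (\<exists>L. \<forall>x. complex_of_real (h x) = tsum L x)"

lemma tsum_Nil[simp]: "tsum [] x = 0" by (simp add: tsum_def)
lemma tsum_Cons[simp]: "tsum (p # L) x = snd p * cis (fst p \<bullet> x) + tsum L x"
  by (simp add: tsum_def)
lemma tsum_append[simp]: "tsum (xs @ ys) x = tsum xs x + tsum ys x"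
  by (simp add: tsum_def)

lemma trigrep_const: "trigrep (\<lambda>x. c)"
  unfolding trigrep_def by (rule exI[of _ "[(0, complex_of_real c)]"]) simp

lemma trigrep_add: "trigrep f \<Longrightarrow> trigrep g \<Longrightarrow> trigrep (\<lambda>x. f x + g x)"
  unfolding trigrep_def by (metis of_real_add tsum_append)

lemma tsum_mult:
  "tsum (concat (map (\<lambda>p. map (\<lambda>q. (fst p + fst q, snd p * snd q)) ys) xs)) x = tsum xs x * tsum ys x"
proof (induction xs)
  case Nil then show ?case by simp
next
  case (Cons p xs)
  have "tsum (map (\<lambda>q. (fst p + fst q, snd p * snd q)) ys) x = snd p * cis (fst p \<bullet> x) * tsum ys x"
    by (induction ys) (simp_all add: inner_add_left cis_mult[symmetric] algebra_simps)
  then show ?case using Cons by (simp add: tsum_def algebra_simps)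
qed

lemma trigrep_mult:
  assumes "trigrep f" "trigrep g" shows "trigrep (\<lambda>x. f x * g x)"
proof -
  obtain xs where xs: "\<And>x. complex_of_real (f x) = tsum xs x" using assms(1) unfolding trigrep_def by blast
  obtain ys where ys: "\<And>x. complex_of_real (g x) = tsum ys x" using assms(2) unfolding trigrep_def by blast
  show ?thesis unfolding trigrep_def
    by (rule exI[of _ "concat (map (\<lambda>p. map (\<lambda>q. (fst p + fst q, snd p * snd q)) ys) xs)"])
       (simp add: tsum_mult xs[symmetric] ys[symmetric])
qed

lemma trigrep_cos: "trigrep (\<lambda>x. cos (\<tau> \<bullet> x))"
  unfolding trigrep_def
  by (rule exI[of _ "[(\<tau>, 1/2), (-\<tau>, 1/2)]"]) (simp add: complex_eq_iff)

lemma trigrep_sin: "trigrep (\<lambda>x. sin (\<tau> \<bullet> x))"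
  unfolding trigrep_def
  by (rule exI[of _ "[(\<tau>, -\<i>/2), (-\<tau>, \<i>/2)]"]) (simp add: complex_eq_iff)

lemma trigrep_sum: "finite A \<Longrightarrow> (\<And>a. a \<in> A \<Longrightarrow> trigrep (f a)) \<Longrightarrow> trigrep (\<lambda>x. \<Sum>a\<in>A. f a x)"
  by (induction A rule: finite_induct) (auto intro: trigrep_add trigrep_const)

lemma Re_tsum: "Re (tsum L x) = (\<Sum>p\<leftarrow>L. Re (snd p) * cos (fst p \<bullet> x) - Im (snd p) * sin (fst p \<bullet> x))"
  by (induction L) (simp_all add: tsum_def)

lemma trigrep_Re: "trigrep h \<Longrightarrow> \<exists>L. \<forall>x. h x = Re (tsum L x)"
  unfolding trigrep_def by (metis Re_complex_of_real)

section \<open>Polynomials on the torus\<close>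

definition emb :: "real \<Rightarrow> real^'m \<Rightarrow> complex^'m" where
  "emb a x = (\<chi> i. cis (a * x $ i))"

lemma trigrep_poly:
  fixes g :: "complex^'m \<Rightarrow> real"
  assumes "real_polynomial_function g"
  shows "trigrep (\<lambda>x. g (emb a x))"
  using assms
proof (induction rule: real_polynomial_function.induct)
  case (linear f)
  have lf: "linear f" using linear bounded_linear.linear by blast
  have eq: "f z = (\<Sum>b\<in>Basis. (z \<bullet> b) * f b)" for z
    using Linear_Algebra.linear_componentwise[OF lf, of z 1] by simp
  have tb: "trigrep (\<lambda>x. (emb a x \<bullet> b) * f b)" if b: "b \<in> (Basis :: (complex^'m) set)" for b
  proof -
    obtain i u where bu: "b = axis i u" "u \<in> (Basis :: complex set)"
      using b unfolding Basis_vec_def by blast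
    have "u = 1 \<or> u = \<i>" using bu(2) by (simp add: Basis_complex_def)
    then have "trigrep (\<lambda>x. emb a x \<bullet> b)"
    proof
      assume "u = 1"
      then have "(\<lambda>x. emb a x \<bullet> b) = (\<lambda>x. cos ((a *\<^sub>R axis i 1) \<bullet> x))"
        by (auto simp: bu emb_def inner_axis inner_axis')
      then show ?thesis using trigrep_cos by metis
    next
      assume "u = \<i>"
      then have "(\<lambda>x. emb a x \<bullet> b) = (\<lambda>x. sin ((a *\<^sub>R axis i 1) \<bullet> x))"
        by (auto simp: bu emb_def inner_axis inner_axis')
      then show ?thesis using trigrep_sin by metis
    qed
    then show ?thesis by (intro trigrep_mult trigrep_const)
  qed
  have ts: "trigrep (\<lambda>x. \<Sum>b\<in>Basis. (emb a x \<bullet> b) * f b)"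
    by (rule trigrep_sum) (auto intro: tb)
  have "(\<lambda>x. f (emb a x)) = (\<lambda>x. \<Sum>b\<in>Basis. (emb a x \<bullet> b) * f b)"
    by (rule ext) (rule eq)
  with ts show ?case by simp
next
  case (const c) then show ?case by (rule trigrep_const)
next
  case (add f g) then show ?case using trigrep_add[OF add.IH] by simp
next
  case (mult f g) then show ?case using trigrep_mult[OF mult.IH] by simp
qed


lemma torus_fun:
  fixes f :: "real^'m \<Rightarrow> real" and L B :: real
  assumes cf: "continuous_on UNIV f" and fB: "\<And>x. \<bar>f x\<bar> \<le> B" and L: "L > 0"
  obtains G :: "complex^'m \<Rightarrow> real" where
    "continuous_on {z. \<forall>i. norm (z$i) = 1} G"
    "\<And>z. \<bar>G z\<bar> \<le> B"
    "\<And>x. (\<forall>i. \<bar>x$i\<bar> \<le> L) \<Longrightarrow> G (emb (pi / (2*L)) x) = f x"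
proof -
  define a where "a = pi / (2*L)"
  define \<rho> where "\<rho> z = (\<Prod>i\<in>UNIV. min 1 (max 0 (1 + 2 * Re (z$i))))" for z :: "complex^'m"
  define G where "G z = \<rho> z * f (\<chi> i. Arg (z$i) / a)" for z
  have a: "a > 0" using L by (simp add: a_def)
  have B0: "B \<ge> 0" using fB[of 0] by linarith
  have \<rho>01: "0 \<le> \<rho> z \<and> \<rho> z \<le> 1" for z unfolding \<rho>_def by (auto intro: prod_nonneg prod_le_1)
  have bound: "\<bar>G z\<bar> \<le> B" for z
  proof -
    have "\<bar>G z\<bar> = \<rho> z * \<bar>f (\<chi> i. Arg (z$i) / a)\<bar>" using \<rho>01[of z] by (simp add: G_def abs_mult)
    also have "\<dots> \<le> 1 * B" using \<rho>01[of z] fB B0 by (intro mult_mono) auto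
    finally show ?thesis by simp
  qed
  have cube: "G (emb a x) = f x" if x: "\<forall>i. \<bar>x$i\<bar> \<le> L" for x
  proof -
    have th: "\<bar>a * x$i\<bar> \<le> pi/2" for i
    proof -
      have "\<bar>a * x$i\<bar> = a * \<bar>x$i\<bar>" using a by (simp add: abs_mult)
      also have "\<dots> \<le> a * L" using x a by (intro mult_left_mono) auto
      also have "\<dots> = pi/2" using L by (simp add: a_def)
      finally show ?thesis .
    qed
    have "Re (emb a x $ i) \<ge> 0" for i
      using th[of i] by (simp add: emb_def cos_ge_zero abs_le_iff)
    then have "\<rho> (emb a x) = 1" unfolding \<rho>_def by (intro prod.neutral) auto
    moreover have "Arg (emb a x $ i) = a * x$i" for i
    proof -
      have "-pi < a * x$i" "a * x$i \<le> pi" using th[of i] pi_gt_zero unfolding abs_le_iff by linarith+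
      then show ?thesis by (simp add: emb_def cis_conv_exp Arg_exp)
    qed
    then have "(\<chi> i. Arg (emb a x $ i) / a) = x" using a by (simp add: vec_eq_iff)
    ultimately show ?thesis by (simp add: G_def)
  qed
  have cont: "isCont G z" if zT: "z \<in> {z. \<forall>i. norm (z$i) = 1}" for z
  proof (cases "\<exists>i. z$i \<in> \<real>\<^sub>\<le>\<^sub>0")
    case True
    then obtain i where "z$i \<in> \<real>\<^sub>\<le>\<^sub>0" by blast
    then obtain r where r: "z$i = of_real r" "r \<le> 0" by (rule nonpos_Reals_cases)
    have "norm (z$i) = 1" using zT by simp
    with r have "\<bar>r\<bar> = 1" by simp
    with r(2) have "r = -1" by linarith
    with r have Rez: "Re (z$i) = -1" by simp
    have zero: "G w = 0" if "Re (w$i) < -1/2" for w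
    proof -
      have "min 1 (max 0 (1 + 2 * Re (w$i))) = 0" using that by simp
      then have "\<rho> w = 0" unfolding \<rho>_def by (intro prod_zero) auto
      then show ?thesis by (simp add: G_def)
    qed
    have "((\<lambda>w. Re (w$i)) \<longlongrightarrow> Re (z$i)) (at z)"
      by (intro tendsto_intros)
    then have "eventually (\<lambda>w. Re (w$i) < -1/2) (at z)"
      using Rez by (intro order_tendstoD(2)) auto
    then have "eventually (\<lambda>w. G w = 0) (at z)"
      by eventually_elim (rule zero)
    then have "(G \<longlongrightarrow> 0) (at z)" by (rule tendsto_eventually)
    moreover have "G z = 0" using Rez by (intro zero) auto
    ultimately show ?thesis unfolding isCont_def by simp
  next
    case False
    have c1: "isCont (\<lambda>w. \<chi> i. Arg (w$i) / a) z"
      unfolding isCont_def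
    proof (intro tendsto_vec_lambda tendsto_divide tendsto_const)
      fix i
      have "isCont Arg (z$i)" using False continuous_at_Arg by blast
      moreover have "((\<lambda>w. w$i) \<longlongrightarrow> z$i) (at z)" by (intro tendsto_intros)
      ultimately show "((\<lambda>w. Arg (w$i)) \<longlongrightarrow> Arg (z$i)) (at z)"
        by (rule isCont_tendsto_compose)
    qed (use a in auto)
    have c2: "isCont f y" for y
      using cf continuous_on_eq_continuous_at by blast
    have c3: "isCont (\<lambda>w. f (\<chi> i. Arg (w$i) / a)) z"
      using c1 c2 by (rule continuous_at_compose[unfolded o_def])
    have cRe: "isCont (\<lambda>x. Re (x$i)) z" for i
      unfolding isCont_def by (intro tendsto_intros)
    have c4: "isCont \<rho> z" unfolding \<rho>_def
      by (intro continuous_intros cRe)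
    show ?thesis unfolding G_def[abs_def] using c3 c4 by (intro continuous_intros)
  qed
  show ?thesis
  proof
    show "continuous_on {z. \<forall>i. norm (z$i) = 1} G"
      using cont by (intro continuous_at_imp_continuous_on) auto
  qed (use bound cube a_def in auto)
qed

lemma compact_torus: "compact {z::complex^'m. \<forall>i. norm (z$i) = 1}"
proof -
  have "closed {z::complex^'m. \<forall>i. z$i \<in> sphere 0 1}" by (intro closed_vector_box) auto
  moreover have "{z::complex^'m. \<forall>i. norm (z$i) = 1} \<subseteq> cball 0 (real CARD('m))"
  proof
    fix z :: "complex^'m" assume "z \<in> {z. \<forall>i. norm (z$i) = 1}"
    then have "norm z \<le> (\<Sum>i\<in>(UNIV::'m set). 1)" using L2_set_le_sum[of UNIV "\<lambda>i. norm (z$i)"] by (simp add: norm_vec_def)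
    then show "z \<in> cball 0 (real CARD('m))" by simp
  qed
  moreover have "{z::complex^'m. \<forall>i. norm (z$i) = 1} = {z::complex^'m. \<forall>i. z$i \<in> sphere 0 1}" by auto
  ultimately show ?thesis
    using bounded_subset[OF bounded_cball] compact_eq_bounded_closed by metis
qed


lemma integrable_bc:
  fixes g :: "'c::topological_space \<Rightarrow> real"
  assumes "prob_space P" "Y \<in> measurable P borel" "continuous_on UNIV g" "\<And>x. \<bar>g x\<bar> \<le> B"
  shows "integrable P (\<lambda>\<omega>. g (Y \<omega>))"
proof -
  interpret prob_space P by fact
  have "g \<in> borel_measurable borel" using assms(3) by (rule borel_measurable_continuous_onI)
  then have "(\<lambda>\<omega>. g (Y \<omega>)) \<in> borel_measurable P" using assms(2) by measurable
  then show ?thesis using assms(4) by (intro integrable_const_bound[where B=B]) auto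
qed

definition psi :: "real \<Rightarrow> real \<Rightarrow> real" where
  "psi L y = min 1 (max 0 (\<bar>y\<bar> - L))"

lemma psi_cont: "continuous_on UNIV (psi L)"
  unfolding psi_def[abs_def] by (intro continuous_intros)

lemma psi_bound: "\<bar>psi L y\<bar> \<le> 1" and psi_nonneg: "psi L y \<ge> 0"
  by (auto simp: psi_def)

lemma bc_Re_tsum: "continuous_on UNIV (\<lambda>x. Re (tsum L x))"
  unfolding tsum_def by (induction L) (auto intro!: continuous_intros)

lemma bound_Re_tsum: "\<bar>Re (tsum L x)\<bar> \<le> (\<Sum>p\<leftarrow>L. norm (snd p))"
proof (induction L)
  case Nil then show ?case by simp
next
  case (Cons p L)
  have "\<bar>Re (snd p * cis (fst p \<bullet> x))\<bar> \<le> norm (snd p)"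
    by (metis abs_Re_le_cmod norm_cis norm_mult mult.right_neutral)
  then show ?case using Cons by simp
qed

context
  fixes M :: "'a measure" and N :: "'b measure"
    and Xn :: "nat \<Rightarrow> 'a \<Rightarrow> real^'m" and X :: "'b \<Rightarrow> real^'m"
  assumes M: "prob_space M" and N: "prob_space N"
    and mXn: "\<And>n. Xn n \<in> borel_measurable M" and mX: "X \<in> borel_measurable N"
    and H: "\<And>t (g::real\<Rightarrow>real). continuous_on UNIV g \<Longrightarrow> bounded (range g) \<Longrightarrow>
            (\<lambda>n. \<integral>\<omega>. g (t \<bullet> Xn n \<omega>) \<partial>M) \<longlonglongrightarrow> (\<integral>\<omega>. g (t \<bullet> X \<omega>) \<partial>N)"
begin

lemma H': fixes g :: "real \<Rightarrow> real" shows "continuous_on UNIV g \<Longrightarrow> (\<And>x. \<bar>g x\<bar> \<le> B) \<Longrightarrow>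
            (\<lambda>n. \<integral>\<omega>. g (t \<bullet> Xn n \<omega>) \<partial>M) \<longlonglongrightarrow> (\<integral>\<omega>. g (t \<bullet> X \<omega>) \<partial>N)"
  by (rule H) (auto simp: bounded_iff)

lemma conv_Re_tsum:
  "(\<lambda>n. \<integral>\<omega>. Re (tsum L (Xn n \<omega>)) \<partial>M) \<longlonglongrightarrow> (\<integral>\<omega>. Re (tsum L (X \<omega>)) \<partial>N)"
proof (induction L)
  case Nil then show ?case by simp
next
  case (Cons p L)
  define c where "c = snd p"
  define \<tau> where "\<tau> = fst p"
  have eq: "Re (tsum (p # L) x) = Re c * cos (\<tau> \<bullet> x) - Im c * sin (\<tau> \<bullet> x) + Re (tsum L x)" for x
    by (simp add: c_def \<tau>_def)
  have mt: "(\<lambda>x. \<tau> \<bullet> x) \<in> borel_measurable borel" by (intro borel_measurable_continuous_onI continuous_intros)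
  have ints: "integrable P (\<lambda>\<omega>. Re c * cos (\<tau> \<bullet> Y \<omega>) - Im c * sin (\<tau> \<bullet> Y \<omega>))"
    "integrable P (\<lambda>\<omega>. Re (tsum L (Y \<omega>)))"
    "integrable P (\<lambda>\<omega>. cos (\<tau> \<bullet> Y \<omega>))" "integrable P (\<lambda>\<omega>. sin (\<tau> \<bullet> Y \<omega>))"
    if P: "prob_space P" and Y: "Y \<in> borel_measurable P" for P :: "'z measure" and Y
  proof -
    have Y': "(\<lambda>\<omega>. \<tau> \<bullet> Y \<omega>) \<in> borel_measurable P" using Y mt by measurable
    show "integrable P (\<lambda>\<omega>. cos (\<tau> \<bullet> Y \<omega>))"
      by (rule integrable_bc[OF P Y', of cos 1]) (auto intro: continuous_intros)
    show "integrable P (\<lambda>\<omega>. sin (\<tau> \<bullet> Y \<omega>))"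
      by (rule integrable_bc[OF P Y', of sin 1]) (auto intro: continuous_intros)
    then show "integrable P (\<lambda>\<omega>. Re c * cos (\<tau> \<bullet> Y \<omega>) - Im c * sin (\<tau> \<bullet> Y \<omega>))"
      using \<open>integrable P (\<lambda>\<omega>. cos (\<tau> \<bullet> Y \<omega>))\<close> by auto
    show "integrable P (\<lambda>\<omega>. Re (tsum L (Y \<omega>)))"
      by (rule integrable_bc[OF P Y bc_Re_tsum bound_Re_tsum])
  qed
  have int_eq: "(\<integral>\<omega>. Re (tsum (p # L) (Y \<omega>)) \<partial>P) =
      Re c * (\<integral>\<omega>. cos (\<tau> \<bullet> Y \<omega>) \<partial>P) - Im c * (\<integral>\<omega>. sin (\<tau> \<bullet> Y \<omega>) \<partial>P) + (\<integral>\<omega>. Re (tsum L (Y \<omega>)) \<partial>P)"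
    if P: "prob_space P" and Y: "Y \<in> borel_measurable P" for P :: "'z measure" and Y
    using ints[OF P Y] unfolding eq by (simp add: integral_add integral_diff)
  have c1: "(\<lambda>n. \<integral>\<omega>. cos (\<tau> \<bullet> Xn n \<omega>) \<partial>M) \<longlonglongrightarrow> (\<integral>\<omega>. cos (\<tau> \<bullet> X \<omega>) \<partial>N)"
    by (rule H'[of _ 1]) (auto intro: continuous_intros)
  have c2: "(\<lambda>n. \<integral>\<omega>. sin (\<tau> \<bullet> Xn n \<omega>) \<partial>M) \<longlonglongrightarrow> (\<integral>\<omega>. sin (\<tau> \<bullet> X \<omega>) \<partial>N)"
    by (rule H'[of _ 1]) (auto intro: continuous_intros)
  show ?case unfolding int_eq[OF M mXn] int_eq[OF N mX]
    by (intro tendsto_intros c1 c2 Cons)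
qed

lemma conv_trigrep:
  assumes "trigrep h"
  shows "(\<lambda>n. \<integral>\<omega>. h (Xn n \<omega>) \<partial>M) \<longlonglongrightarrow> (\<integral>\<omega>. h (X \<omega>) \<partial>N)"
proof -
  obtain L where L: "\<And>x. h x = Re (tsum L x)" using trigrep_Re[OF assms] by blast
  show ?thesis unfolding L by (rule conv_Re_tsum)
qed

lemma meas_psi: fixes Y :: "'z \<Rightarrow> real^'m" shows "Y \<in> borel_measurable P \<Longrightarrow> (\<lambda>\<omega>. psi L (Y \<omega> $ i)) \<in> borel_measurable P"
proof -
  assume Y: "Y \<in> borel_measurable P"
  have "continuous_on UNIV (\<lambda>x::real^'m. psi L (x $ i))"
    unfolding psi_def by (intro continuous_intros)
  then have "(\<lambda>x::real^'m. psi L (x $ i)) \<in> borel_measurable borel"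
    by (rule borel_measurable_continuous_onI)
  with Y show ?thesis by measurable
qed

theorem cw_main:
  fixes f :: "real^'m \<Rightarrow> real"
  assumes cf: "continuous_on UNIV f" and bf: "\<And>x. \<bar>f x\<bar> \<le> B"
  shows "(\<lambda>n. \<integral>\<omega>. f (Xn n \<omega>) \<partial>M) \<longlonglongrightarrow> (\<integral>\<omega>. f (X \<omega>) \<partial>N)"
  unfolding tendsto_iff
proof (intro allI impI)
  fix \<epsilon> :: real assume \<epsilon>: "\<epsilon> > 0"
  interpret Mp: prob_space M by (rule M)
  interpret Np: prob_space N by (rule N)
  have B0: "B \<ge> 0" using bf[of 0] by linarith
  define c where "c = real CARD('m)"
  have c0: "c > 0" by (simp add: c_def)
  define \<eta> where "\<eta> = \<epsilon>/8"
  define K where "K = 2*B + \<eta>"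
  define \<delta> where "\<delta> = \<epsilon> / (8 * (K+1) * c)"
  have \<eta>0: "\<eta> > 0" using \<epsilon> by (simp add: \<eta>_def)
  have K0: "K \<ge> 0" using B0 \<eta>0 by (simp add: K_def)
  have \<delta>0: "\<delta> > 0" using \<epsilon> K0 c0 by (simp add: \<delta>_def)
  have tail: "(\<lambda>k::nat. \<integral>\<omega>. psi (real k) (X \<omega> $ i) \<partial>N) \<longlonglongrightarrow> 0" for i
  proof -
    have "(\<lambda>k::nat. \<integral>\<omega>. psi (real k) (X \<omega> $ i) \<partial>N) \<longlonglongrightarrow> (\<integral>\<omega>. 0 \<partial>N)"
    proof (rule integral_dominated_convergence[where w="\<lambda>_. 1"])
      show "(\<lambda>_. 0::real) \<in> borel_measurable N" by simp
      show "(\<lambda>\<omega>. psi (real k) (X \<omega> $ i)) \<in> borel_measurable N" for k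
        by (rule meas_psi[OF mX])
      show "integrable N (\<lambda>_. 1::real)" by simp
      show "AE \<omega> in N. (\<lambda>k. psi (real k) (X \<omega> $ i)) \<longlonglongrightarrow> 0"
      proof (rule AE_I2)
        fix \<omega>
        have "eventually (\<lambda>k. psi (real k) (X \<omega> $ i) = 0) sequentially"
          unfolding eventually_sequentially
        proof (intro exI allI impI)
          fix k assume "nat \<lceil>\<bar>X \<omega> $ i\<bar>\<rceil> \<le> k"
          then have "\<bar>X \<omega> $ i\<bar> \<le> real k" by linarith
          then show "psi (real k) (X \<omega> $ i) = 0" by (simp add: psi_def)
        qed
        then show "(\<lambda>k. psi (real k) (X \<omega> $ i)) \<longlonglongrightarrow> 0" by (rule tendsto_eventually)
      qed
      show "AE \<omega> in N. norm (psi (real k) (X \<omega> $ i)) \<le> 1" for k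
        using psi_bound by simp
    qed
    then show ?thesis by simp
  qed
  have "eventually (\<lambda>k. \<forall>i. (\<integral>\<omega>. psi (real k) (X \<omega> $ i) \<partial>N) < \<delta>) sequentially"
    by (intro eventually_all_finite order_tendstoD(2)[OF tail \<delta>0])
  then obtain k0 where k0: "\<And>i. (\<integral>\<omega>. psi (real k0) (X \<omega> $ i) \<partial>N) < \<delta>"
    by (auto simp: eventually_sequentially)
  define L0 where "L0 = real k0"
  define Lc where "Lc = L0 + 1"
  have Lc0: "Lc > 0" by (simp add: Lc_def L0_def)
  define T where "T = {z::complex^'m. \<forall>i. norm (z$i) = 1}"
  obtain G :: "complex^'m \<Rightarrow> real" where Gc: "continuous_on T G" and GB: "\<And>z. \<bar>G z\<bar> \<le> B"
    and Gf: "\<And>x. (\<forall>i. \<bar>x$i\<bar> \<le> Lc) \<Longrightarrow> G (emb (pi/(2*Lc)) x) = f x"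
    using torus_fun[OF cf bf Lc0] unfolding T_def by metis
  obtain g where gp: "polynomial_function g" and ga: "\<And>z. z \<in> T \<Longrightarrow> norm (G z - g z) < \<eta>"
    using Stone_Weierstrass_polynomial_function[OF compact_torus Gc[unfolded T_def] \<eta>0] unfolding T_def by blast
  define a where "a = pi/(2*Lc)"
  define h where "h x = g (emb a x)" for x
  have hT: "trigrep h" unfolding h_def[abs_def]
    using trigrep_poly gp real_polynomial_function_eq by blast
  have embT: "emb a x \<in> T" for x by (simp add: emb_def T_def)
  have hB: "\<bar>h x\<bar> \<le> B + \<eta>" for x
    using ga[OF embT[of x]] GB[of "emb a x"] by (simp add: h_def)
  have hc: "continuous_on UNIV h"
  proof -
    have "continuous_on UNIV (emb a :: real^'m \<Rightarrow> complex^'m)"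
      unfolding emb_def[abs_def] cis_conv_exp by (intro continuous_intros)
    moreover have "continuous_on UNIV g" by (rule continuous_on_polymonial_function[OF gp])
    ultimately show ?thesis unfolding h_def[abs_def]
      by (metis continuous_on_compose2 subset_UNIV)
  qed
  define \<Phi> where "\<Phi> x = \<eta> + K * (\<Sum>i\<in>UNIV. psi L0 (x$i))" for x :: "real^'m"
  have sum_nn: "(\<Sum>i\<in>UNIV. psi L0 (x$i)) \<ge> 0" for x :: "real^'m"
    by (intro sum_nonneg psi_nonneg)
  have key: "\<bar>f x - h x\<bar> \<le> \<Phi> x" for x
  proof (cases "\<forall>i. \<bar>x$i\<bar> \<le> Lc")
    case True
    then have "f x = G (emb a x)" using Gf unfolding a_def by metis
    then have "\<bar>f x - h x\<bar> < \<eta>" using ga[OF embT[of x]] by (simp add: h_def)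
    moreover have "\<eta> \<le> \<Phi> x" unfolding \<Phi>_def using K0 sum_nn[of x] by simp
    ultimately show ?thesis by linarith
  next
    case False
    then obtain i where i: "\<bar>x$i\<bar> > Lc" by (auto simp: not_le)
    then have "psi L0 (x$i) = 1" by (simp add: psi_def Lc_def)
    moreover have "psi L0 (x$i) \<le> (\<Sum>j\<in>UNIV. psi L0 (x$j))"
      by (rule member_le_sum) (auto intro: psi_nonneg)
    ultimately have "1 \<le> (\<Sum>j\<in>UNIV. psi L0 (x$j))" by simp
    then have "\<eta> + K \<le> \<Phi> x" unfolding \<Phi>_def using K0
      by (metis add_le_cancel_left mult.right_neutral mult_left_mono)
    moreover have "\<bar>f x - h x\<bar> \<le> K" using bf[of x] hB[of x] by (simp add: K_def)
    ultimately show ?thesis using \<eta>0 by linarith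
  qed
  have \<Phi>c: "continuous_on UNIV \<Phi>" unfolding \<Phi>_def psi_def by (intro continuous_intros)
  have \<Phi>B: "\<bar>\<Phi> x\<bar> \<le> \<eta> + K * c" for x
  proof -
    have "(\<Sum>i\<in>UNIV. psi L0 (x$i)) \<le> (\<Sum>i\<in>(UNIV::'m set). 1)"
      by (intro sum_mono) (simp add: psi_def)
    then have "(\<Sum>i\<in>UNIV. psi L0 (x$i)) \<le> c" by (simp add: c_def)
    then have "K * (\<Sum>i\<in>UNIV. psi L0 (x$i)) \<le> K * c" using K0 by (rule mult_left_mono)
    moreover have "0 \<le> K * (\<Sum>i\<in>UNIV. psi L0 (x$i))" using K0 sum_nn[of x] by simp
    ultimately show ?thesis unfolding \<Phi>_def using \<eta>0 by auto
  qed
  have ints: "integrable P (\<lambda>\<omega>. f (Y \<omega>))" "integrable P (\<lambda>\<omega>. h (Y \<omega>))" "integrable P (\<lambda>\<omega>. \<Phi> (Y \<omega>))"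
    "\<And>i. integrable P (\<lambda>\<omega>. psi L0 (Y \<omega> $ i))"
    if P: "prob_space P" and Y: "Y \<in> borel_measurable P" for P :: "'z measure" and Y
  proof -
    show "integrable P (\<lambda>\<omega>. f (Y \<omega>))" by (rule integrable_bc[OF P Y cf bf])
    show "integrable P (\<lambda>\<omega>. h (Y \<omega>))" by (rule integrable_bc[OF P Y hc hB])
    show "integrable P (\<lambda>\<omega>. \<Phi> (Y \<omega>))" by (rule integrable_bc[OF P Y \<Phi>c \<Phi>B])
    show "integrable P (\<lambda>\<omega>. psi L0 (Y \<omega> $ i))" for i
    proof -
      have "continuous_on UNIV (\<lambda>x::real^'m. psi L0 (x$i))" unfolding psi_def by (intro continuous_intros)
      then show ?thesis using integrable_bc[OF P Y, of "\<lambda>x. psi L0 (x$i)" 1] psi_bound by simp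
    qed
  qed
  have int\<Phi>: "(\<integral>\<omega>. \<Phi> (Y \<omega>) \<partial>P) = \<eta> + K * (\<Sum>i\<in>UNIV. \<integral>\<omega>. psi L0 (Y \<omega> $ i) \<partial>P)"
    if P: "prob_space P" and Y: "Y \<in> borel_measurable P" for P :: "'z measure" and Y
  proof -
    interpret prob_space P by (rule P)
    have "(\<integral>\<omega>. \<Phi> (Y \<omega>) \<partial>P) = (\<integral>\<omega>. \<eta> \<partial>P) + (\<integral>\<omega>. K * (\<Sum>i\<in>UNIV. psi L0 (Y \<omega> $ i)) \<partial>P)"
    proof -
      have i2: "integrable P (\<lambda>\<omega>. K * (\<Sum>i\<in>UNIV. psi L0 (Y \<omega> $ i)))"
        using ints(4)[OF P Y] by (intro integrable_mult_right integrable_sum) auto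
      show ?thesis unfolding \<Phi>_def using Bochner_Integration.integral_add[OF _ i2, of "\<lambda>_. \<eta>"] by simp
    qed
    also have "\<dots> = \<eta> + K * (\<Sum>i\<in>UNIV. \<integral>\<omega>. psi L0 (Y \<omega> $ i) \<partial>P)"
      using ints(4)[OF P Y] by (simp add: integral_sum prob_space.prob_space[OF P])
    finally show ?thesis .
  qed
  have fh: "\<bar>(\<integral>\<omega>. f (Y \<omega>) \<partial>P) - (\<integral>\<omega>. h (Y \<omega>) \<partial>P)\<bar> \<le> (\<integral>\<omega>. \<Phi> (Y \<omega>) \<partial>P)"
    if P: "prob_space P" and Y: "Y \<in> borel_measurable P" for P :: "'z measure" and Y
  proof -
    have "(\<integral>\<omega>. f (Y \<omega>) \<partial>P) - (\<integral>\<omega>. h (Y \<omega>) \<partial>P) = (\<integral>\<omega>. f (Y \<omega>) - h (Y \<omega>) \<partial>P)"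
      using ints[OF P Y] by (simp add: integral_diff)
    also have "\<bar>\<dots>\<bar> \<le> (\<integral>\<omega>. \<Phi> (Y \<omega>) \<partial>P)"
    proof -
      have iabs: "integrable P (\<lambda>\<omega>. \<bar>f (Y \<omega>) - h (Y \<omega>)\<bar>)"
        using ints[OF P Y] by (intro integrable_abs Bochner_Integration.integrable_diff)
      have "\<bar>(\<integral>\<omega>. f (Y \<omega>) - h (Y \<omega>) \<partial>P)\<bar> \<le> (\<integral>\<omega>. \<bar>f (Y \<omega>) - h (Y \<omega>)\<bar> \<partial>P)"
        using integral_norm_bound[of P "\<lambda>\<omega>. f (Y \<omega>) - h (Y \<omega>)"] by simp
      also have "\<dots> \<le> (\<integral>\<omega>. \<Phi> (Y \<omega>) \<partial>P)"
        by (rule integral_mono[OF iabs ints(3)[OF P Y]]) (use key in auto)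
      finally show ?thesis .
    qed
    finally show ?thesis .
  qed
  have psiconv: "(\<lambda>n. \<integral>\<omega>. psi L0 (Xn n \<omega> $ i) \<partial>M) \<longlonglongrightarrow> (\<integral>\<omega>. psi L0 (X \<omega> $ i) \<partial>N)" for i
    using H'[OF psi_cont psi_bound, of L0 "axis i 1"] by (simp add: inner_axis')
  have \<Phi>conv: "(\<lambda>n. \<integral>\<omega>. \<Phi> (Xn n \<omega>) \<partial>M) \<longlonglongrightarrow> (\<integral>\<omega>. \<Phi> (X \<omega>) \<partial>N)"
    unfolding int\<Phi>[OF M mXn] int\<Phi>[OF N mX] by (intro tendsto_intros psiconv)
  have \<Phi>X: "(\<integral>\<omega>. \<Phi> (X \<omega>) \<partial>N) \<le> \<eta> + K * (c * \<delta>)"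
  proof -
    have "(\<Sum>i\<in>UNIV. \<integral>\<omega>. psi L0 (X \<omega> $ i) \<partial>N) \<le> (\<Sum>i\<in>(UNIV::'m set). \<delta>)"
      using k0 unfolding L0_def by (intro sum_mono) (simp add: less_imp_le)
    then have "(\<Sum>i\<in>UNIV. \<integral>\<omega>. psi L0 (X \<omega> $ i) \<partial>N) \<le> c * \<delta>" by (simp add: c_def)
    then show ?thesis unfolding int\<Phi>[OF N mX] using K0 by (simp add: mult_left_mono)
  qed
  have arith: "2 * \<eta> + 2 * (\<eta> + K * (c * \<delta>)) < \<epsilon>"
  proof -
    have K1: "K + 1 \<noteq> 0" "c \<noteq> 0" using K0 c0 by auto
    have "K * (c * \<delta>) = \<epsilon> * K / (8 * (K + 1))" unfolding \<delta>_def using K1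
      by (simp add: divide_simps)
    also have "\<dots> \<le> \<epsilon> / 8" using \<epsilon> K0 by (simp add: field_simps)
    finally have kc: "K * (c * \<delta>) \<le> \<epsilon> / 8" .
    have "2 * (\<epsilon> / 8) + 2 * (\<epsilon> / 8 + K * (c * \<delta>)) \<le> 2 * (\<epsilon> / 8) + 2 * (\<epsilon> / 8 + \<epsilon> / 8)"
      using kc by simp
    also have "\<dots> < \<epsilon>" using \<epsilon> by simp
    finally show ?thesis unfolding \<eta>_def .
  qed
  have ev1: "eventually (\<lambda>n. \<bar>(\<integral>\<omega>. h (Xn n \<omega>) \<partial>M) - (\<integral>\<omega>. h (X \<omega>) \<partial>N)\<bar> < \<eta>) sequentially"
    using conv_trigrep[OF hT] \<eta>0 unfolding tendsto_iff dist_real_def by blast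
  have ev2: "eventually (\<lambda>n. (\<integral>\<omega>. \<Phi> (Xn n \<omega>) \<partial>M) < (\<integral>\<omega>. \<Phi> (X \<omega>) \<partial>N) + \<eta>) sequentially"
    using \<Phi>conv \<eta>0 by (intro order_tendstoD) auto
  show "eventually (\<lambda>n. dist (\<integral>\<omega>. f (Xn n \<omega>) \<partial>M) (\<integral>\<omega>. f (X \<omega>) \<partial>N) < \<epsilon>) sequentially"
    using ev1 ev2
  proof eventually_elim
    case (elim n)
    have a1: "\<bar>(\<integral>\<omega>. f (Xn n \<omega>) \<partial>M) - (\<integral>\<omega>. h (Xn n \<omega>) \<partial>M)\<bar> \<le> (\<integral>\<omega>. \<Phi> (Xn n \<omega>) \<partial>M)"
      by (rule fh[OF M mXn])
    have a2: "\<bar>(\<integral>\<omega>. f (X \<omega>) \<partial>N) - (\<integral>\<omega>. h (X \<omega>) \<partial>N)\<bar> \<le> (\<integral>\<omega>. \<Phi> (X \<omega>) \<partial>N)"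
      by (rule fh[OF N mX])
    show ?case unfolding dist_real_def using elim a1 a2 \<Phi>X arith by (smt (verit))
  qed
qed

end


lemma lip_minmax: "\<bar>min 1 (max 0 s) - min 1 (max 0 t)\<bar> \<le> \<bar>s - t\<bar>" for s t :: real
  by (auto simp: min_def max_def)

lemma cts_step_alt: "x < y \<Longrightarrow> cts_step x y a = min 1 (max 0 ((y - a) / (y - x)))"
  by (auto simp: cts_step_def min_def max_def field_simps)

lemma cts_step_lip:
  assumes "x < y" shows "\<bar>cts_step x y a - cts_step x y b\<bar> \<le> \<bar>a - b\<bar> / (y - x)"
proof -
  have "\<bar>cts_step x y a - cts_step x y b\<bar> \<le> \<bar>(y - a) / (y - x) - (y - b) / (y - x)\<bar>"
    unfolding cts_step_alt[OF assms] by (rule lip_minmax)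
  also have "\<dots> = \<bar>a - b\<bar> / (y - x)" using assms by (simp add: diff_divide_distrib[symmetric] abs_minus_commute)
  finally show ?thesis .
qed

lemma cts_step_cont: "x < y \<Longrightarrow> continuous_on UNIV (cts_step x y)"
  by (rule uniformly_continuous_imp_continuous, rule cts_step_uniformly_continuous)

lemma cts_step_bound: "\<bar>cts_step x y a\<bar> \<le> 1"
  by (auto simp: cts_step_def)

lemma approx_conv:
  fixes Rn :: "nat \<Rightarrow> 'a \<Rightarrow> real" and U :: "'b \<Rightarrow> real" and g :: "real \<Rightarrow> real"
  assumes M: "prob_space M" and N: "prob_space N"
    and mUn: "\<And>n. Rn n \<in> borel_measurable M" and mU: "U \<in> borel_measurable N"
    and A: "\<And>\<delta>. \<delta> > 0 \<Longrightarrow> \<exists>Vn V. (\<forall>n. Vn n \<in> borel_measurable M) \<and> V \<in> borel_measurable N \<and>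
       (\<forall>g::real\<Rightarrow>real. continuous_on UNIV g \<and> bounded (range g) \<longrightarrow>
          (\<lambda>n. \<integral>\<omega>. g (Vn n \<omega>) \<partial>M) \<longlonglongrightarrow> (\<integral>\<omega>. g (V \<omega>) \<partial>N)) \<and>
       (\<forall>n. integrable M (\<lambda>\<omega>. \<bar>Rn n \<omega> - Vn n \<omega>\<bar>)) \<and>
       eventually (\<lambda>n. (\<integral>\<omega>. \<bar>Rn n \<omega> - Vn n \<omega>\<bar> \<partial>M) \<le> \<delta>) sequentially \<and>
       integrable N (\<lambda>\<omega>. \<bar>U \<omega> - V \<omega>\<bar>) \<and> (\<integral>\<omega>. \<bar>U \<omega> - V \<omega>\<bar> \<partial>N) \<le> \<delta>"
    and cg: "continuous_on UNIV g" and bg: "bounded (range g)"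
  shows "(\<lambda>n. \<integral>\<omega>. g (Rn n \<omega>) \<partial>M) \<longlonglongrightarrow> (\<integral>\<omega>. g (U \<omega>) \<partial>N)"
proof -
  interpret Mp: prob_space M by (rule M)
  interpret Np: prob_space N by (rule N)
  have lipconv: "(\<lambda>n. \<integral>\<omega>. cts_step x y (Rn n \<omega>) \<partial>M) \<longlonglongrightarrow> (\<integral>\<omega>. cts_step x y (U \<omega>) \<partial>N)"
    if xy: "x < y" for x y
    unfolding tendsto_iff
  proof (intro allI impI)
    fix \<epsilon> :: real assume \<epsilon>: "\<epsilon> > 0"
    define \<phi> where "\<phi> = cts_step x y"
    define \<Lambda> where "\<Lambda> = 1 / (y - x)"
    have \<Lambda>0: "\<Lambda> > 0" using xy by (simp add: \<Lambda>_def)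
    have lip: "\<bar>\<phi> a - \<phi> b\<bar> \<le> \<Lambda> * \<bar>a - b\<bar>" for a b
      using cts_step_lip[OF xy, of a b] by (simp add: \<phi>_def \<Lambda>_def)
    have c\<phi>: "continuous_on UNIV \<phi>" unfolding \<phi>_def by (rule cts_step_cont[OF xy])
    have b\<phi>: "\<bar>\<phi> a\<bar> \<le> 1" for a unfolding \<phi>_def by (rule cts_step_bound)
    define \<delta> where "\<delta> = \<epsilon> / (4 * \<Lambda>)"
    have \<delta>0: "\<delta> > 0" using \<epsilon> \<Lambda>0 by (simp add: \<delta>_def)
    obtain Vn V where mVn: "\<forall>n. Vn n \<in> borel_measurable M" and mV: "V \<in> borel_measurable N"
      and cV: "\<forall>g::real\<Rightarrow>real. continuous_on UNIV g \<and> bounded (range g) \<longrightarrow>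
          (\<lambda>n. \<integral>\<omega>. g (Vn n \<omega>) \<partial>M) \<longlonglongrightarrow> (\<integral>\<omega>. g (V \<omega>) \<partial>N)"
      and iMn: "\<forall>n. integrable M (\<lambda>\<omega>. \<bar>Rn n \<omega> - Vn n \<omega>\<bar>)"
      and evM: "eventually (\<lambda>n. (\<integral>\<omega>. \<bar>Rn n \<omega> - Vn n \<omega>\<bar> \<partial>M) \<le> \<delta>) sequentially"
      and iN: "integrable N (\<lambda>\<omega>. \<bar>U \<omega> - V \<omega>\<bar>)" and bN: "(\<integral>\<omega>. \<bar>U \<omega> - V \<omega>\<bar> \<partial>N) \<le> \<delta>"
      using A[OF \<delta>0] by (elim exE conjE) blast
    have cv: "(\<lambda>n. \<integral>\<omega>. \<phi> (Vn n \<omega>) \<partial>M) \<longlonglongrightarrow> (\<integral>\<omega>. \<phi> (V \<omega>) \<partial>N)"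
      using cV c\<phi> b\<phi> by (auto simp: bounded_iff)
    have ev1: "eventually (\<lambda>n. \<bar>(\<integral>\<omega>. \<phi> (Vn n \<omega>) \<partial>M) - (\<integral>\<omega>. \<phi> (V \<omega>) \<partial>N)\<bar> < \<epsilon>/4) sequentially"
      using cv[unfolded tendsto_iff dist_real_def, rule_format, of "\<epsilon>/4"] \<epsilon> by simp
    have diffb: "\<bar>(\<integral>\<omega>. \<phi> (Y \<omega>) \<partial>P) - (\<integral>\<omega>. \<phi> (Z \<omega>) \<partial>P)\<bar> \<le> \<Lambda> * (\<integral>\<omega>. \<bar>Y \<omega> - Z \<omega>\<bar> \<partial>P)"
      if P: "prob_space P" and Y: "Y \<in> borel_measurable P" and Z: "Z \<in> borel_measurable P"
        and iYZ: "integrable P (\<lambda>\<omega>. \<bar>Y \<omega> - Z \<omega>\<bar>)" for P :: "'z measure" and Y Z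
    proof -
      have i1: "integrable P (\<lambda>\<omega>. \<phi> (Y \<omega>))" by (rule integrable_bc[OF P Y c\<phi> b\<phi>])
      have i2: "integrable P (\<lambda>\<omega>. \<phi> (Z \<omega>))" by (rule integrable_bc[OF P Z c\<phi> b\<phi>])
      have "(\<integral>\<omega>. \<phi> (Y \<omega>) \<partial>P) - (\<integral>\<omega>. \<phi> (Z \<omega>) \<partial>P) = (\<integral>\<omega>. \<phi> (Y \<omega>) - \<phi> (Z \<omega>) \<partial>P)"
        using i1 i2 by simp
      also have "\<bar>\<dots>\<bar> \<le> (\<integral>\<omega>. \<bar>\<phi> (Y \<omega>) - \<phi> (Z \<omega>)\<bar> \<partial>P)"
        using integral_norm_bound[of P "\<lambda>\<omega>. \<phi> (Y \<omega>) - \<phi> (Z \<omega>)"] by simp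
      also have "\<dots> \<le> (\<integral>\<omega>. \<Lambda> * \<bar>Y \<omega> - Z \<omega>\<bar> \<partial>P)"
        using i1 i2 iYZ lip by (intro integral_mono) auto
      also have "\<dots> = \<Lambda> * (\<integral>\<omega>. \<bar>Y \<omega> - Z \<omega>\<bar> \<partial>P)" by simp
      finally show ?thesis .
    qed
    show "eventually (\<lambda>n. dist (\<integral>\<omega>. cts_step x y (Rn n \<omega>) \<partial>M) (\<integral>\<omega>. cts_step x y (U \<omega>) \<partial>N) < \<epsilon>) sequentially"
      using ev1 evM
    proof eventually_elim
      case (elim n)
      have a1: "\<bar>(\<integral>\<omega>. \<phi> (Rn n \<omega>) \<partial>M) - (\<integral>\<omega>. \<phi> (Vn n \<omega>) \<partial>M)\<bar> \<le> \<Lambda> * \<delta>"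
        using diffb[OF M mUn spec[OF mVn] spec[OF iMn], of n] elim(2) \<Lambda>0
        by (meson mult_left_mono order_trans less_imp_le)
      have a2: "\<bar>(\<integral>\<omega>. \<phi> (U \<omega>) \<partial>N) - (\<integral>\<omega>. \<phi> (V \<omega>) \<partial>N)\<bar> \<le> \<Lambda> * \<delta>"
        using diffb[OF N mU mV iN] bN \<Lambda>0
        by (meson mult_left_mono order_trans less_imp_le)
      have "\<Lambda> * \<delta> = \<epsilon> / 4" using \<Lambda>0 by (simp add: \<delta>_def)
      then show ?case unfolding dist_real_def \<phi>_def[symmetric] using a1 a2 elim(1) \<epsilon> by linarith
    qed
  qed
  define \<mu> where "\<mu> n = distr M borel (Rn n)" for n
  define \<nu> where "\<nu> = distr N borel U"
  have rd\<mu>: "real_distribution (\<mu> n)" for n unfolding \<mu>_def using mUn by (rule Mp.real_distribution_distr)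
  have rd\<nu>: "real_distribution \<nu>" unfolding \<nu>_def using mU by (rule Np.real_distribution_distr)
  have mstep: "cts_step x y \<in> borel_measurable borel" if "x < y" for x y
    by (rule borel_measurable_continuous_onI[OF cts_step_cont[OF that]])
  have wc: "weak_conv_m \<mu> \<nu>"
  proof (rule integral_cts_step_conv_imp_weak_conv[OF rd\<mu> rd\<nu>])
    fix x y :: real assume xy: "x < y"
    show "(\<lambda>n. integral\<^sup>L (\<mu> n) (cts_step x y)) \<longlonglongrightarrow> integral\<^sup>L \<nu> (cts_step x y)"
      unfolding \<mu>_def \<nu>_def using lipconv[OF xy] mstep[OF xy] mUn mU
      by (simp add: integral_distr)
  qed
  obtain B where B: "\<And>x. norm (g x) \<le> B" using bg unfolding bounded_iff by auto
  have cgx: "isCont g x" for x using cg continuous_on_eq_continuous_at by blast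
  have "(\<lambda>n. integral\<^sup>L (\<mu> n) g) \<longlonglongrightarrow> integral\<^sup>L \<nu> g"
    by (rule weak_conv_imp_integral_bdd_continuous_conv[OF rd\<mu> rd\<nu> wc cgx B])
  moreover have "g \<in> borel_measurable borel" by (rule borel_measurable_continuous_onI[OF cg])
  ultimately show ?thesis unfolding \<mu>_def \<nu>_def using mUn mU by (simp add: integral_distr)
qed


section \<open>Basic properties of the class pwC\<close>

lemma pwC_D:
  assumes "\<phi> \<in> pwC"
  obtains \<H> B R where "finite \<H>" "\<And>H. H \<in> \<H> \<Longrightarrow> hyperplane H" "\<And>x. x \<notin> \<Union>\<H> \<Longrightarrow> isCont \<phi> x"
    "\<And>x. \<bar>\<phi> x\<bar> \<le> B" "\<And>x. \<phi> x \<noteq> 0 \<Longrightarrow> norm x \<le> R"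
proof -
  from assms obtain \<H> where H: "finite \<H>" "\<forall>H\<in>\<H>. hyperplane H" "\<forall>x. x \<notin> \<Union>\<H> \<longrightarrow> isCont \<phi> x"
    and b1: "bounded (range \<phi>)" and b2: "bounded {x. \<phi> x \<noteq> 0}" unfolding pwC_def by blast
  from b1 obtain B where B: "\<And>x. \<bar>\<phi> x\<bar> \<le> B" unfolding bounded_iff by auto
  from b2 obtain R where R: "\<And>x. \<phi> x \<noteq> 0 \<Longrightarrow> norm x \<le> R" unfolding bounded_iff by auto
  show ?thesis using H B R that by blast
qed

lemma pwC_I:
  assumes "finite \<H>" "\<And>H. H \<in> \<H> \<Longrightarrow> hyperplane H" "\<And>x. x \<notin> \<Union>\<H> \<Longrightarrow> isCont \<phi> x"
    "\<And>x. \<bar>\<phi> x\<bar> \<le> B" "\<And>x. \<phi> x \<noteq> 0 \<Longrightarrow> norm x \<le> R"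
  shows "\<phi> \<in> pwC"
proof -
  have "bounded (range \<phi>)" using assms(4) unfolding bounded_iff by auto
  moreover have "bounded {x. \<phi> x \<noteq> 0}" using assms(5) unfolding bounded_iff by auto
  ultimately show ?thesis using assms(1-3) unfolding pwC_def by blast
qed

lemma pwC_zero: "(\<lambda>x. 0) \<in> pwC"
  by (rule pwC_I[of "{}" _ 0 0]) auto

lemma pwC_add:
  assumes "\<phi> \<in> pwC" "\<psi> \<in> pwC" shows "(\<lambda>x. \<phi> x + \<psi> x) \<in> pwC"
proof -
  obtain H1 B1 R1 where 1: "finite H1" "\<And>H. H \<in> H1 \<Longrightarrow> hyperplane H" "\<And>x. x \<notin> \<Union>H1 \<Longrightarrow> isCont \<phi> x"
    "\<And>x. \<bar>\<phi> x\<bar> \<le> B1" "\<And>x. \<phi> x \<noteq> 0 \<Longrightarrow> norm x \<le> R1" using pwC_D[OF assms(1)] by metis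
  obtain H2 B2 R2 where 2: "finite H2" "\<And>H. H \<in> H2 \<Longrightarrow> hyperplane H" "\<And>x. x \<notin> \<Union>H2 \<Longrightarrow> isCont \<psi> x"
    "\<And>x. \<bar>\<psi> x\<bar> \<le> B2" "\<And>x. \<psi> x \<noteq> 0 \<Longrightarrow> norm x \<le> R2" using pwC_D[OF assms(2)] by metis
  show ?thesis
  proof (rule pwC_I[of "H1 \<union> H2" _ "B1 + B2" "max R1 R2"])
    fix x :: 'a
    show "\<bar>\<phi> x + \<psi> x\<bar> \<le> B1 + B2" using 1(4)[of x] 2(4)[of x] by linarith
    show "\<phi> x + \<psi> x \<noteq> 0 \<Longrightarrow> norm x \<le> max R1 R2" using 1(5)[of x] 2(5)[of x] by force
    show "x \<notin> \<Union>(H1 \<union> H2) \<Longrightarrow> isCont (\<lambda>x. \<phi> x + \<psi> x) x" using 1(3) 2(3) by (auto intro: continuous_intros)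
  qed (use 1 2 in auto)
qed

lemma pwC_mult:
  assumes "\<phi> \<in> pwC" "\<psi> \<in> pwC" shows "(\<lambda>x. \<phi> x * \<psi> x) \<in> pwC"
proof -
  obtain H1 B1 R1 where 1: "finite H1" "\<And>H. H \<in> H1 \<Longrightarrow> hyperplane H" "\<And>x. x \<notin> \<Union>H1 \<Longrightarrow> isCont \<phi> x"
    "\<And>x. \<bar>\<phi> x\<bar> \<le> B1" "\<And>x. \<phi> x \<noteq> 0 \<Longrightarrow> norm x \<le> R1" using pwC_D[OF assms(1)] by metis
  obtain H2 B2 R2 where 2: "finite H2" "\<And>H. H \<in> H2 \<Longrightarrow> hyperplane H" "\<And>x. x \<notin> \<Union>H2 \<Longrightarrow> isCont \<psi> x"
    "\<And>x. \<bar>\<psi> x\<bar> \<le> B2" "\<And>x. \<psi> x \<noteq> 0 \<Longrightarrow> norm x \<le> R2" using pwC_D[OF assms(2)] by metis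
  show ?thesis
  proof (rule pwC_I[of "H1 \<union> H2" _ "B1 * B2" "R1"])
    fix x :: 'a
    show "\<bar>\<phi> x * \<psi> x\<bar> \<le> B1 * B2" unfolding abs_mult using 1(4)[of x] 2(4)[of x]
      by (intro mult_mono) auto
    show "\<phi> x * \<psi> x \<noteq> 0 \<Longrightarrow> norm x \<le> R1" using 1(5)[of x] by force
    show "x \<notin> \<Union>(H1 \<union> H2) \<Longrightarrow> isCont (\<lambda>x. \<phi> x * \<psi> x) x" using 1(3) 2(3) by (auto intro: continuous_intros)
  qed (use 1 2 in auto)
qed

lemma pwC_const_mult: "\<phi> \<in> pwC \<Longrightarrow> (\<lambda>x. c * \<phi> x) \<in> pwC"
proof -
  assume a: "\<phi> \<in> pwC"
  obtain H1 B1 R1 where 1: "finite H1" "\<And>H. H \<in> H1 \<Longrightarrow> hyperplane H" "\<And>x. x \<notin> \<Union>H1 \<Longrightarrow> isCont \<phi> x"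
    "\<And>x. \<bar>\<phi> x\<bar> \<le> B1" "\<And>x. \<phi> x \<noteq> 0 \<Longrightarrow> norm x \<le> R1" using pwC_D[OF a] by metis
  show ?thesis
  proof (rule pwC_I[of "H1" _ "\<bar>c\<bar> * B1" "R1"])
    fix x :: 'a
    show "\<bar>c * \<phi> x\<bar> \<le> \<bar>c\<bar> * B1" unfolding abs_mult using 1(4)[of x]
      by (intro mult_left_mono) auto
    show "c * \<phi> x \<noteq> 0 \<Longrightarrow> norm x \<le> R1" using 1(5)[of x] by force
    show "x \<notin> \<Union>H1 \<Longrightarrow> isCont (\<lambda>x. c * \<phi> x) x" using 1(3) by (auto intro: continuous_intros)
  qed (use 1 in auto)
qed

lemma pwC_diff: "\<phi> \<in> pwC \<Longrightarrow> \<psi> \<in> pwC \<Longrightarrow> (\<lambda>x. \<phi> x - \<psi> x) \<in> pwC"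
  using pwC_add[OF _ pwC_const_mult[of \<psi> "-1"], of \<phi>] by simp

lemma pwC_sum: "finite A \<Longrightarrow> (\<And>a. a \<in> A \<Longrightarrow> f a \<in> pwC) \<Longrightarrow> (\<lambda>x. \<Sum>a\<in>A. f a x) \<in> pwC"
  by (induction A rule: finite_induct) (auto intro: pwC_add pwC_zero)

lemma hyperplane_null: "hyperplane H \<Longrightarrow> H \<in> null_sets lebesgue"
  unfolding hyperplane_def using negligible_hyperplane negligible_iff_null_sets by blast

lemma hyperplane_closed: "hyperplane H \<Longrightarrow> closed H"
  unfolding hyperplane_def using closed_hyperplane by blast

lemma lebesgue_meas_AE:
  fixes f g :: "'a::euclidean_space \<Rightarrow> real"
  assumes f: "f \<in> borel_measurable lebesgue" and ae: "AE x in lebesgue. f x = g x"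
  shows "g \<in> borel_measurable lebesgue"
  unfolding borel_measurable_iff_less
proof
  fix a :: real
  have mA: "{x \<in> space lebesgue. f x < a} \<in> sets lebesgue" using f by measurable
  have ae2: "AE x in lebesgue. x \<in> {x \<in> space lebesgue. f x < a} \<longleftrightarrow> x \<in> {x \<in> space lebesgue. g x < a}"
    using ae by eventually_elim auto
  show "{x \<in> space lebesgue. g x < a} \<in> sets lebesgue"
    by (rule completion.in_sets_AE[OF ae2 mA]) simp
qed

lemma pwC_meas: "\<phi> \<in> pwC \<Longrightarrow> \<phi> \<in> borel_measurable lebesgue"
proof -
  assume a: "\<phi> \<in> pwC"
  obtain \<H> B R where H: "finite \<H>" "\<And>H. H \<in> \<H> \<Longrightarrow> hyperplane H" "\<And>x. x \<notin> \<Union>\<H> \<Longrightarrow> isCont \<phi> x"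
    using pwC_D[OF a] by metis
  define Z where "Z = \<Union>\<H>"
  have Znull: "Z \<in> null_sets lebesgue" unfolding Z_def
    using null_sets_UN'[of \<H> "\<lambda>H. H" lebesgue] H(1,2) hyperplane_null by (auto intro: countable_finite)
  have Zclosed: "closed Z" unfolding Z_def using H(1,2) hyperplane_closed by (intro closed_Union) auto
  have "continuous_on (-Z) \<phi>" using H(3) unfolding Z_def
    by (intro continuous_at_imp_continuous_on) auto
  then have "(\<lambda>x. indicator (-Z) x *\<^sub>R \<phi> x) \<in> borel_measurable borel"
    using Zclosed by (intro borel_measurable_continuous_on_indicator) auto
  then have m: "(\<lambda>x. indicator (-Z) x *\<^sub>R \<phi> x) \<in> borel_measurable lebesgue"
    by (intro measurable_completion) simp
  have "AE x in lebesgue. x \<notin> Z" using Znull by (rule AE_not_in)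
  then have "AE x in lebesgue. indicator (-Z) x *\<^sub>R \<phi> x = \<phi> x" by eventually_elim simp
  with m show ?thesis by (rule lebesgue_meas_AE)
qed

lemma pwC_integrable:
  assumes "\<phi> \<in> pwC" shows "integrable lebesgue \<phi>"
proof -
  obtain \<H> B R where B: "\<And>x. \<bar>\<phi> x\<bar> \<le> B" and R: "\<And>x. \<phi> x \<noteq> 0 \<Longrightarrow> norm x \<le> R"
    using pwC_D[OF assms] by metis
  have ic: "integrable lebesgue (\<lambda>x. B * indicator (cball (0::'a) R) x)"
  proof -
    have "emeasure lborel (cball (0::'a) R) < \<infinity>" by (rule emeasure_lborel_cball_finite)
    then have "integrable lborel (indicator (cball (0::'a) R) :: _ \<Rightarrow> real)" by simp
    then have "integrable lebesgue (indicator (cball (0::'a) R) :: _ \<Rightarrow> real)"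
      by (simp add: integrable_completion)
    then show ?thesis by simp
  qed
  show ?thesis
  proof (rule Bochner_Integration.integrable_bound[OF ic pwC_meas[OF assms]])
    show "AE x in lebesgue. norm (\<phi> x) \<le> norm (B * indicator (cball 0 R) x)"
    proof (rule AE_I2)
      fix x :: 'a
      show "norm (\<phi> x) \<le> norm (B * indicator (cball 0 R) x)"
        using B[of x] R[of x] by (cases "\<phi> x = 0") (auto simp: indicator_def)
    qed
  qed
qed

lemma pwC_L2: "\<phi> \<in> pwC \<Longrightarrow> \<phi> \<in> L2"
proof -
  assume a: "\<phi> \<in> pwC"
  have "integrable lebesgue (\<lambda>x. \<phi> x * \<phi> x)" by (rule pwC_integrable[OF pwC_mult[OF a a]])
  then show ?thesis unfolding L2_def power2_eq_square using pwC_meas[OF a] by blast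
qed


definition supp :: "nat \<Rightarrow> (real^'d \<Rightarrow> real) \<Rightarrow> (int^'d) set" where
  "supp n \<phi> = {k. \<phi> (lattice_pt n k) \<noteq> 0}"

lemma finite_int_box: "finite A \<Longrightarrow> finite {k::int^'d. \<forall>i. k$i \<in> A}"
proof -
  assume A: "finite A"
  have "{k::int^'d. \<forall>i. k$i \<in> A} \<subseteq> vec_lambda ` (PiE UNIV (\<lambda>_. A))"
  proof
    fix k :: "int^'d" assume "k \<in> {k. \<forall>i. k$i \<in> A}"
    then have "(\<lambda>i. k$i) \<in> PiE UNIV (\<lambda>_. A)" by auto
    moreover have "k = vec_lambda (\<lambda>i. k$i)" by simp
    ultimately show "k \<in> vec_lambda ` (PiE UNIV (\<lambda>_. A))" by blast
  qed
  moreover have "finite (vec_lambda ` (PiE UNIV (\<lambda>_::'d. A)))"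
    using A by (intro finite_imageI finite_PiE) auto
  ultimately show ?thesis by (rule finite_subset)
qed

lemma lattice_pt_nth[simp]: "lattice_pt n k $ i = real_of_int (k$i) / real n"
  by (simp add: lattice_pt_def)

lemma supp_finite:
  assumes "\<phi> \<in> pwC" "n > 0" shows "finite (supp n \<phi>)"
proof -
  obtain \<H> B R where R: "\<And>x. \<phi> x \<noteq> 0 \<Longrightarrow> norm x \<le> R" using pwC_D[OF assms(1)] by metis
  define N where "N = \<lceil>real n * R\<rceil>"
  have "supp n \<phi> \<subseteq> {k. \<forall>i. k$i \<in> {-N..N}}"
  proof
    fix k assume "k \<in> supp n \<phi>"
    then have nr: "norm (lattice_pt n k) \<le> R" using R by (auto simp: supp_def)
    show "k \<in> {k. \<forall>i. k$i \<in> {-N..N}}"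
    proof (clarify)
      fix i
      have "\<bar>real_of_int (k$i) / real n\<bar> \<le> R" using component_le_norm_cart[of "lattice_pt n k" i] nr by simp
      moreover have "\<bar>real_of_int (k$i) / real n\<bar> = \<bar>real_of_int (k$i)\<bar> / real n" by (simp add: abs_divide)
      ultimately have "\<bar>real_of_int (k$i)\<bar> / real n \<le> R" by simp
      then have "\<bar>real_of_int (k$i)\<bar> \<le> R * real n" using assms(2) by (simp add: pos_divide_le_eq)
      then have "\<bar>real_of_int (k$i)\<bar> \<le> real n * R" by (simp add: mult.commute)
      then have "\<bar>real_of_int (k$i)\<bar> \<le> real_of_int N" unfolding N_def by linarith
      then have "real_of_int \<bar>k$i\<bar> \<le> real_of_int N" by simp
      then have "\<bar>k$i\<bar> \<le> N" by (simp only: of_int_le_iff)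
      then show "k$i \<in> {-N..N}" by (auto simp: abs_le_iff)
    qed
  qed
  moreover have "finite {k::int^'d. \<forall>i. k$i \<in> {-N..N}}" by (rule finite_int_box) simp
  ultimately show ?thesis by (rule finite_subset)
qed

definition fl :: "nat \<Rightarrow> real^'d \<Rightarrow> int^'d" where
  "fl n x = (\<chi> i. \<lfloor>real n * x$i\<rfloor>)"

definition cell :: "nat \<Rightarrow> int^'d \<Rightarrow> (real^'d) set" where
  "cell n k = {x. \<forall>i. \<lfloor>real n * x$i\<rfloor> = k$i}"

lemma fl_eq_iff: "fl n x = k \<longleftrightarrow> x \<in> cell n k"
  by (auto simp: fl_def cell_def vec_eq_iff)

lemma cell_sets: "cell n k \<in> sets lborel"
  unfolding cell_def by measurable

lemma cell_sets_borel: "cell n k \<in> sets borel"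
  unfolding cell_def by measurable

lemma lattice_fl_dist:
  assumes "n > 0" shows "\<bar>x$i - lattice_pt n (fl n x) $ i\<bar> \<le> 1 / real n"
proof -
  have a: "0 \<le> real n * x$i - real_of_int \<lfloor>real n * x$i\<rfloor>" "real n * x$i - real_of_int \<lfloor>real n * x$i\<rfloor> \<le> 1"
    by linarith+
  have e: "x$i - lattice_pt n (fl n x) $ i = (real n * x$i - real_of_int \<lfloor>real n * x$i\<rfloor>) / real n"
    using assms by (simp add: fl_def diff_divide_distrib)
  show ?thesis unfolding e using a assms by (simp add: divide_right_mono)
qed

lemma measure_cell:
  fixes k :: "int^'d"
  assumes n: "n > 0" shows "measure lborel (cell n k) = (1 / real n) ^ CARD('d)"
proof -
  define a :: "real^'d" where "a = (\<chi> i. real_of_int (k$i) / real n)"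
  define b :: "real^'d" where "b = (\<chi> i. (real_of_int (k$i) + 1) / real n)"
  have ab: "\<forall>\<beta>\<in>Basis. a \<bullet> \<beta> \<le> b \<bullet> \<beta>"
    using n by (auto simp: Basis_vec_def a_def b_def inner_axis divide_right_mono)
  have prodv: "(\<Prod>\<beta>\<in>Basis. (b - a) \<bullet> \<beta>) = (1 / real n) ^ CARD('d)"
  proof -
    have "(\<Prod>\<beta>\<in>Basis. (b - a) \<bullet> \<beta>) = (\<Prod>\<beta>\<in>(Basis::(real^'d) set). 1 / real n)"
      by (intro prod.cong) (auto simp: Basis_vec_def a_def b_def inner_axis diff_divide_distrib[symmetric])
    also have "\<dots> = (1 / real n) ^ CARD('d)" by simp
    finally show ?thesis .
  qed
  have sub1: "box a b \<subseteq> cell n k"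
  proof
    fix x assume "x \<in> box a b"
    then have "a$i < x$i \<and> x$i < b$i" for i by (simp add: mem_box_cart)
    then have "real_of_int (k$i) < real n * x$i \<and> real n * x$i < real_of_int (k$i) + 1" for i
      using n by (auto simp: a_def b_def field_simps)
    then have "\<lfloor>real n * x$i\<rfloor> = k$i" for i by (meson floor_eq_iff less_imp_le)
    then show "x \<in> cell n k" by (simp add: cell_def)
  qed
  have sub2: "cell n k \<subseteq> cbox a b"
  proof
    fix x assume "x \<in> cell n k"
    then have "\<lfloor>real n * x$i\<rfloor> = k$i" for i by (simp add: cell_def)
    then have "real_of_int (k$i) \<le> real n * x$i \<and> real n * x$i \<le> real_of_int (k$i) + 1" for i
      by (metis floor_correct less_imp_le of_int_add of_int_1)
    then have "a$i \<le> x$i \<and> x$i \<le> b$i" for i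
      using n by (auto simp: a_def b_def field_simps)
    then show "x \<in> cbox a b" by (simp add: mem_box_cart)
  qed
  have fm: "cell n k \<in> fmeasurable lborel"
  proof (rule fmeasurableI[OF cell_sets])
    have "emeasure lborel (cell n k) \<le> emeasure lborel (cbox a b)"
      using sub2 by (intro emeasure_mono) auto
    then show "emeasure lborel (cell n k) < \<infinity>"
      using emeasure_lborel_cbox_finite[of a b] by (simp add: order_le_less_trans)
  qed
  have "measure lborel (box a b) \<le> measure lborel (cell n k)"
    using sub1 fm by (intro measure_mono_fmeasurable) auto
  moreover have "measure lborel (cell n k) \<le> measure lborel (cbox a b)"
    using sub2 by (intro measure_mono_fmeasurable) (auto simp: cell_sets_borel)
  ultimately show ?thesis
    using ab prodv by (simp add: measure_lborel_box_eq measure_lborel_cbox_eq)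
qed


lemma step_sum:
  assumes "finite (supp n g)"
  shows "g (lattice_pt n (fl n x)) = (\<Sum>k\<in>supp n g. g (lattice_pt n k) * indicator (cell n k) x)"
proof -
  have "(\<Sum>k\<in>supp n g. g (lattice_pt n k) * indicator (cell n k) x)
      = (\<Sum>k\<in>supp n g. if fl n x = k then g (lattice_pt n k) else 0)"
    by (intro sum.cong) (auto simp: indicator_def fl_eq_iff)
  also have "\<dots> = (if fl n x \<in> supp n g then g (lattice_pt n (fl n x)) else 0)"
    using assms by (simp add: sum.delta)
  also have "\<dots> = g (lattice_pt n (fl n x))" by (auto simp: supp_def)
  finally show ?thesis by simp
qed

lemma step_meas:
  assumes "finite (supp n g)"
  shows "(\<lambda>x. g (lattice_pt n (fl n x))) \<in> borel_measurable borel"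
proof -
  have "(\<lambda>x. \<Sum>k\<in>supp n g. g (lattice_pt n k) * indicator (cell n k) x) \<in> borel_measurable borel"
    using cell_sets_borel by measurable
  then show ?thesis by (subst step_sum[OF assms]) 
qed

lemma step_integral:
  fixes g :: "real^'d \<Rightarrow> real"
  assumes "finite (supp n g)" "n > 0"
  shows "integral\<^sup>L lebesgue (\<lambda>x. g (lattice_pt n (fl n x))) = (\<Sum>k\<in>supp n g. g (lattice_pt n k)) / real n ^ CARD('d)"
proof -
  have "integral\<^sup>L lebesgue (\<lambda>x. g (lattice_pt n (fl n x))) = integral\<^sup>L lborel (\<lambda>x. g (lattice_pt n (fl n x)))"
    using step_meas[OF assms(1)] by (intro integral_completion) simp
  also have "\<dots> = (\<integral>x. (\<Sum>k\<in>supp n g. g (lattice_pt n k) * indicator (cell n k) x) \<partial>lborel)"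
    by (subst step_sum[OF assms(1)]) simp
  also have "\<dots> = (\<Sum>k\<in>supp n g. g (lattice_pt n k) * measure lborel (cell n k))"
  proof -
    have fin: "emeasure lborel (cell n k) < \<infinity>" for k :: "int^'d"
    proof -
      have "emeasure lborel (cell n k) = ennreal (measure lborel (cell n k))"
      proof (rule emeasure_eq_ennreal_measure)
        show "emeasure lborel (cell n k) \<noteq> \<top>"
        proof
          assume inf: "emeasure lborel (cell n k) = \<top>"
          then have "measure lborel (cell n k) = 0" by (simp add: measure_def)
          with measure_cell[OF assms(2), of k] assms(2) show False by simp
        qed
      qed
      then show ?thesis by simp
    qed
    have "(\<integral>x. (\<Sum>k\<in>supp n g. g (lattice_pt n k) * indicator (cell n k) x) \<partial>lborel)
        = (\<Sum>k\<in>supp n g. (\<integral>x. g (lattice_pt n k) * indicator (cell n k) x \<partial>lborel))"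
    proof (rule Bochner_Integration.integral_sum)
      fix k assume "k \<in> supp n g"
      have "integrable lborel (indicator (cell n k) :: _ \<Rightarrow> real)"
        using fin[of k] cell_sets[of n k] by (intro integrable_real_indicator) auto
      then show "integrable lborel (\<lambda>x. g (lattice_pt n k) * indicator (cell n k) x)"
        by (rule integrable_mult_right)
    qed
    also have "\<dots> = (\<Sum>k\<in>supp n g. g (lattice_pt n k) * measure lborel (cell n k))"
      by simp
    finally show ?thesis .
  qed
  also have "\<dots> = (\<Sum>k\<in>supp n g. g (lattice_pt n k)) / real n ^ CARD('d)"
    using assms(2) by (simp add: measure_cell sum_divide_distrib power_one_over)
  finally show ?thesis .
qed

lemma riemann:
  fixes g :: "real^'d \<Rightarrow> real"
  assumes g: "g \<in> pwC"
  shows "(\<lambda>n. (\<Sum>k\<in>supp n g. g (lattice_pt n k)) / real n ^ CARD('d)) \<longlonglongrightarrow> integral\<^sup>L lebesgue g"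
proof (rule LIMSEQ_imp_Suc)
  obtain \<H> B R where H: "finite \<H>" "\<And>H. H \<in> \<H> \<Longrightarrow> hyperplane H" "\<And>x. x \<notin> \<Union>\<H> \<Longrightarrow> isCont g x"
    and B: "\<And>x. \<bar>g x\<bar> \<le> B" and R: "\<And>x. g x \<noteq> 0 \<Longrightarrow> norm x \<le> R"
    using pwC_D[OF g] by metis
  define s where "s m x = g (lattice_pt (Suc m) (fl (Suc m) x))" for m x
  have fin: "finite (supp (Suc m) g)" for m using supp_finite[OF g] by simp
  have ints: "integral\<^sup>L lebesgue (s m) = (\<Sum>k\<in>supp (Suc m) g. g (lattice_pt (Suc m) k)) / real (Suc m) ^ CARD('d)" for m
    unfolding s_def using step_integral[OF fin] by simp
  define c where "c = real CARD('d)"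
  define w where "w x = B * indicator (cball (0::real^'d) (R + c)) x" for x
  have iw: "integrable lebesgue w"
  proof -
    have "emeasure lborel (cball (0::real^'d) (R + c)) < \<infinity>" by (rule emeasure_lborel_cball_finite)
    then have "integrable lborel (indicator (cball (0::real^'d) (R + c)) :: _ \<Rightarrow> real)" by simp
    then have "integrable lebesgue (indicator (cball (0::real^'d) (R + c)) :: _ \<Rightarrow> real)"
      by (simp add: integrable_completion)
    then show ?thesis unfolding w_def[abs_def] by simp
  qed
  have near: "norm (x - lattice_pt (Suc m) (fl (Suc m) x)) \<le> c / real (Suc m)" for m and x :: "real^'d"
  proof -
    have "norm (x - lattice_pt (Suc m) (fl (Suc m) x)) \<le> (\<Sum>i\<in>UNIV. \<bar>(x - lattice_pt (Suc m) (fl (Suc m) x)) $ i\<bar>)"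
      by (rule norm_le_l1_cart)
    also have "\<dots> \<le> (\<Sum>i\<in>(UNIV::'d set). 1 / real (Suc m))"
    proof (rule sum_mono)
      fix i :: 'd
      show "\<bar>(x - lattice_pt (Suc m) (fl (Suc m) x)) $ i\<bar> \<le> 1 / real (Suc m)"
        using lattice_fl_dist[of "Suc m" x i] by simp
    qed
    also have "\<dots> = c / real (Suc m)" by (simp add: c_def)
    finally show ?thesis .
  qed
  have bound: "norm (s m x) \<le> w x" for m and x :: "real^'d"
  proof (cases "s m x = 0")
    case True
    then show ?thesis using B[of 0] by (simp add: w_def indicator_def)
  next
    case False
    then have "norm (lattice_pt (Suc m) (fl (Suc m) x)) \<le> R" using R by (simp add: s_def)
    moreover have "c / real (Suc m) \<le> c" by (simp add: c_def divide_le_eq)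
    ultimately have "norm x \<le> R + c" using near[of x m] norm_triangle_sub[of x "lattice_pt (Suc m) (fl (Suc m) x)"]
      by linarith
    then show ?thesis using B[of "lattice_pt (Suc m) (fl (Suc m) x)"] by (simp add: w_def s_def)
  qed
  define Z where "Z = \<Union>\<H>"
  have Znull: "Z \<in> null_sets lebesgue" unfolding Z_def
    using null_sets_UN'[of \<H> "\<lambda>H. H" lebesgue] H(1,2) hyperplane_null by (auto intro: countable_finite)
  have conv: "(\<lambda>m. s m x) \<longlonglongrightarrow> g x" if x: "x \<notin> Z" for x :: "real^'d"
  proof -
    have "(\<lambda>m. lattice_pt (Suc m) (fl (Suc m) x) - x) \<longlonglongrightarrow> 0"
    proof (rule Lim_null_comparison)
      show "eventually (\<lambda>m. norm (lattice_pt (Suc m) (fl (Suc m) x) - x) \<le> c / real (Suc m)) sequentially"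
        using near by (simp add: norm_minus_commute)
      show "(\<lambda>m. c / real (Suc m)) \<longlonglongrightarrow> 0"
        using LIMSEQ_Suc[OF lim_const_over_n[of c]] by simp
    qed
    then have "(\<lambda>m. lattice_pt (Suc m) (fl (Suc m) x)) \<longlonglongrightarrow> x" by (simp add: LIM_zero_iff)
    moreover have "isCont g x" using H(3) x unfolding Z_def by blast
    ultimately show ?thesis unfolding s_def by (rule isCont_tendsto_compose[rotated])
  qed
  have "(\<lambda>m. integral\<^sup>L lebesgue (s m)) \<longlonglongrightarrow> integral\<^sup>L lebesgue g"
  proof (rule integral_dominated_convergence[OF pwC_meas[OF g] _ iw])
    show "s m \<in> borel_measurable lebesgue" for m
      unfolding s_def using step_meas[OF fin] by (intro measurable_completion) simp
    show "AE x in lebesgue. (\<lambda>m. s m x) \<longlonglongrightarrow> g x"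
      using AE_not_in[OF Znull] by eventually_elim (rule conv)
    show "AE x in lebesgue. norm (s m x) \<le> w x" for m using bound by simp
  qed
  then show "(\<lambda>n. (\<Sum>k\<in>supp (Suc n) g. g (lattice_pt (Suc n) k)) / real (Suc n) ^ CARD('d)) \<longlonglongrightarrow> integral\<^sup>L lebesgue g"
    using ints by simp
qed


section \<open>Elementary properties of S\<close>

lemma S_zero_n: "S \<zeta> 0 \<phi> \<omega> = 0"
  by (simp add: S_def)

lemma S_superset:
  fixes \<zeta> :: "int^'d \<Rightarrow> 'a \<Rightarrow> real"
  assumes "finite K" "supp n \<phi> \<subseteq> K"
  shows "S \<zeta> n \<phi> \<omega> = real n powr (- real CARD('d) / 2) * (\<Sum>k\<in>K. \<zeta> k \<omega> * \<phi> (lattice_pt n k))"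
proof -
  have "(\<Sum>k | \<phi> (lattice_pt n k) \<noteq> 0. \<zeta> k \<omega> * \<phi> (lattice_pt n k)) = (\<Sum>k\<in>K. \<zeta> k \<omega> * \<phi> (lattice_pt n k))"
    using assms by (intro sum.mono_neutral_left) (auto simp: supp_def)
  then show ?thesis by (simp add: S_def)
qed

lemma S_meas: "(\<And>k. \<zeta> k \<in> borel_measurable M) \<Longrightarrow> S \<zeta> n \<phi> \<in> borel_measurable M"
  unfolding S_def[abs_def]
  by (intro borel_measurable_times borel_measurable_const borel_measurable_sum) auto

lemma S_lin:
  fixes \<zeta> :: "int^'d \<Rightarrow> 'a \<Rightarrow> real" and \<phi> :: "'i \<Rightarrow> real^'d \<Rightarrow> real"
  assumes I: "finite I" and \<phi>: "\<And>i. i \<in> I \<Longrightarrow> \<phi> i \<in> pwC"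
  shows "S \<zeta> n (\<lambda>x. \<Sum>i\<in>I. c i * \<phi> i x) \<omega> = (\<Sum>i\<in>I. c i * S \<zeta> n (\<phi> i) \<omega>)"
proof (cases "n = 0")
  case True then show ?thesis by (simp add: S_zero_n)
next
  case False
  define K where "K = (\<Union>i\<in>I. supp n (\<phi> i))"
  have fK: "finite K" unfolding K_def using I \<phi> supp_finite False by auto
  have sK: "supp n (\<phi> i) \<subseteq> K" if "i \<in> I" for i unfolding K_def using that by auto
  have sK2: "supp n (\<lambda>x. \<Sum>i\<in>I. c i * \<phi> i x) \<subseteq> K"
  proof
    fix k assume "k \<in> supp n (\<lambda>x. \<Sum>i\<in>I. c i * \<phi> i x)"
    then have nz: "(\<Sum>i\<in>I. c i * \<phi> i (lattice_pt n k)) \<noteq> 0" by (simp add: supp_def)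
    have "\<exists>i\<in>I. \<phi> i (lattice_pt n k) \<noteq> 0"
    proof (rule ccontr)
      assume "\<not> (\<exists>i\<in>I. \<phi> i (lattice_pt n k) \<noteq> 0)"
      then have "\<forall>i\<in>I. c i * \<phi> i (lattice_pt n k) = 0" by auto
      then have "(\<Sum>i\<in>I. c i * \<phi> i (lattice_pt n k)) = 0" by (intro sum.neutral) blast
      with nz show False by simp
    qed
    then obtain i where "i \<in> I" "\<phi> i (lattice_pt n k) \<noteq> 0" by blast
    then show "k \<in> K" unfolding K_def supp_def by auto
  qed
  have "S \<zeta> n (\<lambda>x. \<Sum>i\<in>I. c i * \<phi> i x) \<omega> =
    real n powr (- real CARD('d) / 2) * (\<Sum>k\<in>K. \<zeta> k \<omega> * (\<Sum>i\<in>I. c i * \<phi> i (lattice_pt n k)))"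
    by (rule S_superset[OF fK sK2])
  also have "\<dots> = (\<Sum>i\<in>I. c i * (real n powr (- real CARD('d) / 2) * (\<Sum>k\<in>K. \<zeta> k \<omega> * \<phi> i (lattice_pt n k))))"
    by (simp add: sum_distrib_left sum_distrib_right sum.swap[of _ K I] algebra_simps)
  also have "\<dots> = (\<Sum>i\<in>I. c i * S \<zeta> n (\<phi> i) \<omega>)"
    by (intro sum.cong refl) (simp add: S_superset[OF fK sK])
  finally show ?thesis .
qed

lemma S_diff:
  fixes \<zeta> :: "int^'d \<Rightarrow> 'a \<Rightarrow> real"
  assumes "\<phi> \<in> pwC" "\<psi> \<in> pwC"
  shows "S \<zeta> n (\<lambda>x. \<phi> x - \<psi> x) \<omega> = S \<zeta> n \<phi> \<omega> - S \<zeta> n \<psi> \<omega>"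
proof -
  define f where "f b = (if b then \<phi> else \<psi>)" for b
  define c :: "bool \<Rightarrow> real" where "c b = (if b then 1 else -1)" for b
  have "S \<zeta> n (\<lambda>x. \<Sum>b\<in>UNIV. c b * f b x) \<omega> = (\<Sum>b\<in>UNIV. c b * S \<zeta> n (f b) \<omega>)"
    using assms by (intro S_lin) (auto simp: f_def)
  moreover have "(\<lambda>x. \<Sum>b\<in>UNIV. c b * f b x) = (\<lambda>x. \<phi> x - \<psi> x)"
    by (simp add: UNIV_bool c_def f_def)
  ultimately show ?thesis by (simp add: UNIV_bool c_def f_def)
qed

lemma abs_le_quad: "r > 0 \<Longrightarrow> \<bar>z\<bar> \<le> r / 2 + z\<^sup>2 / (2 * r)" for r z :: real
proof -
  assume r: "r > 0"
  have "0 \<le> (\<bar>z\<bar> - r)\<^sup>2" by simp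
  then have "2 * r * \<bar>z\<bar> \<le> r\<^sup>2 + z\<^sup>2" by (simp add: power2_eq_square algebra_simps)
  then show ?thesis using r by (simp add: field_simps power2_eq_square)
qed


lemma powr_sq_lattice: "n > 0 \<Longrightarrow> (real n powr (- real d / 2))\<^sup>2 = 1 / real n ^ d"
proof -
  assume n: "n > 0"
  have "(real n powr (- real d / 2))\<^sup>2 = real n powr (- real d / 2) * real n powr (- real d / 2)"
    by (simp add: power2_eq_square)
  also have "\<dots> = real n powr (- real d)" by (simp add: powr_add[symmetric])
  also have "\<dots> = 1 / real n ^ d" using n by (simp add: powr_minus powr_realpow divide_inverse)
  finally show ?thesis .
qed

context
  fixes M :: "'a measure" and \<zeta> :: "int^'d \<Rightarrow> 'a \<Rightarrow> real"
  assumes M: "prob_space M" and m\<zeta>: "\<And>k. \<zeta> k \<in> borel_measurable M" and st: "stationary_field M \<zeta>"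
    and sq0: "integrable M (\<lambda>\<omega>. (\<zeta> 0 \<omega>)\<^sup>2)" and E0: "prob_space.expectation M (\<zeta> 0) = 0"
    and sumc: "(\<lambda>k. \<bar>covariance M (\<zeta> 0) (\<zeta> k)\<bar>) summable_on UNIV"
begin

lemma transfer:
  fixes F :: "(int^'d \<Rightarrow> real) \<Rightarrow> real"
  assumes K: "finite K" and F: "F \<in> borel_measurable (PiM K (\<lambda>_. borel))"
  shows "integrable M (\<lambda>\<omega>. F (\<lambda>k\<in>K. \<zeta> (k + h) \<omega>)) \<longleftrightarrow> integrable M (\<lambda>\<omega>. F (\<lambda>k\<in>K. \<zeta> k \<omega>))"
    and "(\<integral>\<omega>. F (\<lambda>k\<in>K. \<zeta> (k + h) \<omega>) \<partial>M) = (\<integral>\<omega>. F (\<lambda>k\<in>K. \<zeta> k \<omega>) \<partial>M)"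
proof -
  have g1: "(\<lambda>\<omega>. \<lambda>k\<in>K. \<zeta> (k + h) \<omega>) \<in> measurable M (PiM K (\<lambda>_. borel))"
    by (intro measurable_restrict m\<zeta>)
  have g0: "(\<lambda>\<omega>. \<lambda>k\<in>K. \<zeta> k \<omega>) \<in> measurable M (PiM K (\<lambda>_. borel))"
    by (intro measurable_restrict m\<zeta>)
  have eq: "distr M (PiM K (\<lambda>_. borel)) (\<lambda>\<omega>. \<lambda>k\<in>K. \<zeta> (k + h) \<omega>) = distr M (PiM K (\<lambda>_. borel)) (\<lambda>\<omega>. \<lambda>k\<in>K. \<zeta> k \<omega>)"
    using st K unfolding stationary_field_def by blast
  show "integrable M (\<lambda>\<omega>. F (\<lambda>k\<in>K. \<zeta> (k + h) \<omega>)) \<longleftrightarrow> integrable M (\<lambda>\<omega>. F (\<lambda>k\<in>K. \<zeta> k \<omega>))"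
    using integrable_distr_eq[OF g1 F] integrable_distr_eq[OF g0 F] eq by simp
  show "(\<integral>\<omega>. F (\<lambda>k\<in>K. \<zeta> (k + h) \<omega>) \<partial>M) = (\<integral>\<omega>. F (\<lambda>k\<in>K. \<zeta> k \<omega>) \<partial>M)"
    using integral_distr[OF g1 F] integral_distr[OF g0 F] eq by simp
qed

lemma sq_int: "integrable M (\<lambda>\<omega>. (\<zeta> k \<omega>)\<^sup>2)"
proof -
  have c0[measurable]: "(\<lambda>y::int^'d \<Rightarrow> real. y 0) \<in> measurable (PiM {0::int^'d} (\<lambda>_. borel)) borel"
    by (rule measurable_component_singleton) simp
  have F: "(\<lambda>y::int^'d \<Rightarrow> real. (y 0)\<^sup>2) \<in> borel_measurable (PiM {0::int^'d} (\<lambda>_. borel))" by measurable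
  have "integrable M (\<lambda>\<omega>. (\<lambda>y. (y 0)\<^sup>2) (\<lambda>i\<in>{0}. \<zeta> (i + k) \<omega>))"
    using transfer(1)[OF _ F, of k] sq0 by simp
  then show ?thesis by simp
qed

lemma int_k: "integrable M (\<zeta> k)"
proof -
  interpret prob_space M by (rule M)
  show ?thesis by (rule square_integrable_imp_integrable[OF m\<zeta> sq_int])
qed

lemma prod_int: "integrable M (\<lambda>\<omega>. \<zeta> j \<omega> * \<zeta> k \<omega>)"
proof (rule Bochner_Integration.integrable_bound)
  show "integrable M (\<lambda>\<omega>. (\<zeta> j \<omega>)\<^sup>2 + (\<zeta> k \<omega>)\<^sup>2)" using sq_int by auto
  show "(\<lambda>\<omega>. \<zeta> j \<omega> * \<zeta> k \<omega>) \<in> borel_measurable M" using m\<zeta> by measurable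
  show "AE \<omega> in M. norm (\<zeta> j \<omega> * \<zeta> k \<omega>) \<le> norm ((\<zeta> j \<omega>)\<^sup>2 + (\<zeta> k \<omega>)\<^sup>2)"
  proof (rule AE_I2)
    fix \<omega>
    have "2 * \<bar>\<zeta> j \<omega> * \<zeta> k \<omega>\<bar> \<le> (\<zeta> j \<omega>)\<^sup>2 + (\<zeta> k \<omega>)\<^sup>2"
      using sum_squares_bound[of "\<bar>\<zeta> j \<omega>\<bar>" "\<bar>\<zeta> k \<omega>\<bar>"] by (simp add: abs_mult)
    then show "norm (\<zeta> j \<omega> * \<zeta> k \<omega>) \<le> norm ((\<zeta> j \<omega>)\<^sup>2 + (\<zeta> k \<omega>)\<^sup>2)" by simp
  qed
qed

lemma prod_eq: "(\<integral>\<omega>. \<zeta> j \<omega> * \<zeta> k \<omega> \<partial>M) = (\<integral>\<omega>. \<zeta> 0 \<omega> * \<zeta> (k - j) \<omega> \<partial>M)"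
proof -
  define K where "K = {0, k - j}"
  have c0[measurable]: "(\<lambda>y::int^'d \<Rightarrow> real. y 0) \<in> measurable (PiM K (\<lambda>_. borel)) borel"
    by (rule measurable_component_singleton) (simp add: K_def)
  have c1[measurable]: "(\<lambda>y::int^'d \<Rightarrow> real. y (k - j)) \<in> measurable (PiM K (\<lambda>_. borel)) borel"
    by (rule measurable_component_singleton) (simp add: K_def)
  have F: "(\<lambda>y::int^'d \<Rightarrow> real. y 0 * y (k - j)) \<in> borel_measurable (PiM K (\<lambda>_. borel))" by measurable
  have "(\<integral>\<omega>. (\<lambda>y. y 0 * y (k - j)) (\<lambda>i\<in>K. \<zeta> (i + j) \<omega>) \<partial>M) = (\<integral>\<omega>. (\<lambda>y. y 0 * y (k - j)) (\<lambda>i\<in>K. \<zeta> i \<omega>) \<partial>M)"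
    by (rule transfer(2)[OF _ F]) (simp add: K_def)
  then show ?thesis by (simp add: K_def)
qed

definition cv :: "int^'d \<Rightarrow> real" where "cv m = covariance M (\<zeta> 0) (\<zeta> m)"
definition Cc :: real where "Cc = infsum (\<lambda>k. \<bar>cv k\<bar>) UNIV"

lemma cov_eq: "(\<integral>\<omega>. \<zeta> 0 \<omega> * \<zeta> m \<omega> \<partial>M) = cv m"
proof -
  have e0: "(\<integral>\<omega>. \<zeta> 0 \<omega> \<partial>M) = 0" using E0 by simp
  define c where "c = (\<integral>\<omega>. \<zeta> m \<omega> \<partial>M)"
  have "cv m = (\<integral>\<omega>. \<zeta> 0 \<omega> * \<zeta> m \<omega> - c * \<zeta> 0 \<omega> \<partial>M)"
    unfolding cv_def covariance_def e0 c_def[symmetric] by (simp add: algebra_simps)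
  also have "\<dots> = (\<integral>\<omega>. \<zeta> 0 \<omega> * \<zeta> m \<omega> \<partial>M) - c * (\<integral>\<omega>. \<zeta> 0 \<omega> \<partial>M)"
    using prod_int int_k by simp
  finally show ?thesis using e0 by simp
qed

lemma prod_cv: "(\<integral>\<omega>. \<zeta> j \<omega> * \<zeta> k \<omega> \<partial>M) = cv (k - j)"
  by (rule trans[OF prod_eq cov_eq])

lemma sum_cv_le:
  assumes "finite K" "inj_on f K" shows "(\<Sum>x\<in>K. \<bar>cv (f x)\<bar>) \<le> Cc"
proof -
  have "(\<Sum>x\<in>K. \<bar>cv (f x)\<bar>) = (\<Sum>m\<in>f ` K. \<bar>cv m\<bar>)"
    using assms(2) by (simp add: sum.reindex)
  also have "\<dots> = infsum (\<lambda>m. \<bar>cv m\<bar>) (f ` K)" using assms(1) by simp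
  also have "\<dots> \<le> infsum (\<lambda>m. \<bar>cv m\<bar>) UNIV"
    using assms(1) sumc by (intro infsum_mono_neutral) (auto simp: cv_def)
  finally show ?thesis by (simp add: Cc_def)
qed

lemma Cc_nonneg: "Cc \<ge> 0"
  unfolding Cc_def by (intro infsum_nonneg) auto

lemma second_moment:
  assumes h: "h \<in> pwC" and n: "n > 0"
  shows "integrable M (\<lambda>\<omega>. (S \<zeta> n h \<omega>)\<^sup>2)"
    and "(\<integral>\<omega>. (S \<zeta> n h \<omega>)\<^sup>2 \<partial>M) \<le> Cc * ((\<Sum>k\<in>supp n h. (h (lattice_pt n k))\<^sup>2) / real n ^ CARD('d))"
proof -
  define K where "K = supp n h"
  have fK: "finite K" unfolding K_def using supp_finite[OF h n] .
  define a where "a = real n powr (- real CARD('d) / 2)"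
  define v where "v k = h (lattice_pt n k)" for k
  have Seq: "S \<zeta> n h \<omega> = a * (\<Sum>k\<in>K. \<zeta> k \<omega> * v k)" for \<omega>
    unfolding a_def v_def by (rule S_superset[OF fK]) (simp add: K_def)
  have sq: "(S \<zeta> n h \<omega>)\<^sup>2 = a\<^sup>2 * (\<Sum>j\<in>K. \<Sum>k\<in>K. (v j * v k) * (\<zeta> j \<omega> * \<zeta> k \<omega>))" for \<omega>
    unfolding Seq power2_eq_square sum_product by (simp add: algebra_simps sum_distrib_left)
  have ii: "integrable M (\<lambda>\<omega>. a\<^sup>2 * (\<Sum>j\<in>K. \<Sum>k\<in>K. (v j * v k) * (\<zeta> j \<omega> * \<zeta> k \<omega>)))"
    using prod_int by (intro integrable_mult_right integrable_sum) auto
  then show "integrable M (\<lambda>\<omega>. (S \<zeta> n h \<omega>)\<^sup>2)" unfolding sq .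
  have "(\<integral>\<omega>. (S \<zeta> n h \<omega>)\<^sup>2 \<partial>M) = a\<^sup>2 * (\<Sum>j\<in>K. \<Sum>k\<in>K. (v j * v k) * (\<integral>\<omega>. \<zeta> j \<omega> * \<zeta> k \<omega> \<partial>M))"
    unfolding sq using prod_int by (simp add: Bochner_Integration.integral_sum integrable_sum)
  also have "\<dots> = a\<^sup>2 * (\<Sum>j\<in>K. \<Sum>k\<in>K. (v j * v k) * cv (k - j))"
    by (simp only: prod_cv)
  also have "\<dots> \<le> a\<^sup>2 * (\<Sum>j\<in>K. \<Sum>k\<in>K. ((v j)\<^sup>2 / 2 + (v k)\<^sup>2 / 2) * \<bar>cv (k - j)\<bar>)"
  proof (intro mult_left_mono sum_mono)
    fix j k
    have "v j * v k \<le> \<bar>v j * v k\<bar>" by simp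
    have "2 * \<bar>v j * v k\<bar> \<le> (v j)\<^sup>2 + (v k)\<^sup>2"
      using sum_squares_bound[of "\<bar>v j\<bar>" "\<bar>v k\<bar>"] by (simp add: abs_mult)
    then have "\<bar>v j * v k\<bar> \<le> (v j)\<^sup>2 / 2 + (v k)\<^sup>2 / 2" by simp
    then have "\<bar>v j * v k\<bar> * \<bar>cv (k - j)\<bar> \<le> ((v j)\<^sup>2 / 2 + (v k)\<^sup>2 / 2) * \<bar>cv (k - j)\<bar>"
      by (intro mult_right_mono) auto
    moreover have "v j * v k * cv (k - j) \<le> \<bar>v j * v k\<bar> * \<bar>cv (k - j)\<bar>"
      by (metis abs_ge_self abs_mult)
    ultimately show "v j * v k * cv (k - j) \<le> ((v j)\<^sup>2 / 2 + (v k)\<^sup>2 / 2) * \<bar>cv (k - j)\<bar>" by linarith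
  qed simp
  also have "(\<Sum>j\<in>K. \<Sum>k\<in>K. ((v j)\<^sup>2 / 2 + (v k)\<^sup>2 / 2) * \<bar>cv (k - j)\<bar>)
      = (\<Sum>j\<in>K. (v j)\<^sup>2 * (\<Sum>k\<in>K. \<bar>cv (k - j)\<bar>)) / 2 + (\<Sum>k\<in>K. (v k)\<^sup>2 * (\<Sum>j\<in>K. \<bar>cv (k - j)\<bar>)) / 2"
  proof -
    have pw: "((v j)\<^sup>2 / 2 + (v k)\<^sup>2 / 2) * \<bar>cv (k - j)\<bar> = (v j)\<^sup>2 * \<bar>cv (k - j)\<bar> / 2 + (v k)\<^sup>2 * \<bar>cv (k - j)\<bar> / 2" for j k
      by (simp add: field_simps)
    have A: "(\<Sum>j\<in>K. \<Sum>k\<in>K. (v j)\<^sup>2 * \<bar>cv (k - j)\<bar>) = (\<Sum>j\<in>K. (v j)\<^sup>2 * (\<Sum>k\<in>K. \<bar>cv (k - j)\<bar>))"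
      by (simp add: sum_distrib_left)
    have B: "(\<Sum>j\<in>K. \<Sum>k\<in>K. (v k)\<^sup>2 * \<bar>cv (k - j)\<bar>) = (\<Sum>k\<in>K. (v k)\<^sup>2 * (\<Sum>j\<in>K. \<bar>cv (k - j)\<bar>))"
      by (subst sum.swap) (simp add: sum_distrib_left)
    show ?thesis by (simp only: pw sum.distrib sum_divide_distrib[symmetric] A B)
  qed
  also have "a\<^sup>2 * (\<dots>) = a\<^sup>2 / 2 * ((\<Sum>j\<in>K. (v j)\<^sup>2 * (\<Sum>k\<in>K. \<bar>cv (k - j)\<bar>)) + (\<Sum>k\<in>K. (v k)\<^sup>2 * (\<Sum>j\<in>K. \<bar>cv (k - j)\<bar>)))"
    by (simp add: field_simps)
  also have "\<dots> \<le> a\<^sup>2 / 2 * ((\<Sum>j\<in>K. (v j)\<^sup>2 * Cc) + (\<Sum>k\<in>K. (v k)\<^sup>2 * Cc))"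
  proof -
    have s1: "(\<Sum>k\<in>K. \<bar>cv (k - j)\<bar>) \<le> Cc" for j using fK by (intro sum_cv_le) (auto simp: inj_on_def)
    have s2: "(\<Sum>j\<in>K. \<bar>cv (k - j)\<bar>) \<le> Cc" for k using fK by (intro sum_cv_le) (auto simp: inj_on_def)
    have "(\<Sum>j\<in>K. (v j)\<^sup>2 * (\<Sum>k\<in>K. \<bar>cv (k - j)\<bar>)) \<le> (\<Sum>j\<in>K. (v j)\<^sup>2 * Cc)"
      using s1 by (intro sum_mono mult_left_mono) auto
    moreover have "(\<Sum>k\<in>K. (v k)\<^sup>2 * (\<Sum>j\<in>K. \<bar>cv (k - j)\<bar>)) \<le> (\<Sum>k\<in>K. (v k)\<^sup>2 * Cc)"
      using s2 by (intro sum_mono mult_left_mono) auto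
    ultimately show ?thesis by (intro mult_left_mono add_mono) auto
  qed
  also have "\<dots> = Cc * (a\<^sup>2 * (\<Sum>k\<in>K. (v k)\<^sup>2))"
  proof -
    have e: "(\<Sum>k\<in>K. (v k)\<^sup>2 * Cc) = Cc * (\<Sum>k\<in>K. (v k)\<^sup>2)" by (simp add: sum_distrib_left mult.commute)
    show ?thesis unfolding e by (simp add: field_simps)
  qed
  also have "a\<^sup>2 = 1 / real n ^ CARD('d)" unfolding a_def by (rule powr_sq_lattice[OF n])
  finally show "(\<integral>\<omega>. (S \<zeta> n h \<omega>)\<^sup>2 \<partial>M) \<le> Cc * ((\<Sum>k\<in>supp n h. (h (lattice_pt n k))\<^sup>2) / real n ^ CARD('d))"
    by (simp add: K_def v_def)
qed

end


lemma gauss_moments: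
  assumes v: "v \<ge> 0"
  shows "integrable (centered_gaussian v) (\<lambda>z. \<bar>z\<bar>)" "integrable (centered_gaussian v) (\<lambda>z. z\<^sup>2)"
    "(\<integral>z. z\<^sup>2 \<partial>centered_gaussian v) = v"
proof -
  have "integrable (centered_gaussian v) (\<lambda>z. \<bar>z\<bar>) \<and> integrable (centered_gaussian v) (\<lambda>z. z\<^sup>2) \<and>
        (\<integral>z. z\<^sup>2 \<partial>centered_gaussian v) = v"
  proof (cases "v = 0")
    case True
    interpret prob_space "return borel (0::real)" by (rule prob_space_return) simp
    have ae: "AE z in return borel (0::real). z = 0" by (simp add: AE_return)
    have i: "integrable (return borel (0::real)) f" if "f \<in> borel_measurable borel" for f :: "real \<Rightarrow> real"
    proof (rule Bochner_Integration.integrable_bound[of _ "\<lambda>_. \<bar>f 0\<bar>"])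
      show "integrable (return borel 0) (\<lambda>_. \<bar>f 0\<bar>)" by (rule finite_measure.integrable_const[OF prob_space.finite_measure[OF prob_space_return]]) simp
      show "f \<in> borel_measurable (return borel 0)" using that by simp
      show "AE x in return borel 0. norm (f x) \<le> norm \<bar>f 0\<bar>" using ae by eventually_elim simp
    qed
    have "(\<integral>z. z\<^sup>2 \<partial>return borel (0::real)) = 0\<^sup>2"
      by (rule integral_return) auto
    then show ?thesis using True by (auto simp: centered_gaussian_def intro!: i)
  next
    case False
    then have v0: "v > 0" using v by simp
    define s where "s = sqrt v"
    have s0: "s > 0" using v0 by (simp add: s_def)
    have cg: "centered_gaussian v = density lborel (normal_density 0 s)"
      using False by (simp add: centered_gaussian_def s_def)
    have i1: "integrable lborel (\<lambda>x. normal_density 0 s x * \<bar>x\<bar>)"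
      using integrable_normal_moment_abs[OF s0, of 0 1] by simp
    have i2: "integrable lborel (\<lambda>x. normal_density 0 s x * x\<^sup>2)"
      using integrable_normal_moment[OF s0, of 0 2] by simp
    have "(\<integral>x. normal_density 0 s x * x\<^sup>2 \<partial>lborel) = s\<^sup>2"
      using integral_normal_moment_even[OF s0, of 0 1] by (simp add: power2_eq_square)
    also have "s\<^sup>2 = v" using v by (simp add: s_def)
    finally have e: "(\<integral>x. normal_density 0 s x * x\<^sup>2 \<partial>lborel) = v" .
    show ?thesis unfolding cg using i1 i2 e
      by (simp add: integrable_density integral_density)
  qed
  then show "integrable (centered_gaussian v) (\<lambda>z. \<bar>z\<bar>)" "integrable (centered_gaussian v) (\<lambda>z. z\<^sup>2)"
    "(\<integral>z. z\<^sup>2 \<partial>centered_gaussian v) = v" by auto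
qed

lemma abs_moment_bound:
  fixes Y :: "'a \<Rightarrow> real"
  assumes P: "prob_space P" and iA: "integrable P (\<lambda>\<omega>. \<bar>Y \<omega>\<bar>)" and iS: "integrable P (\<lambda>\<omega>. (Y \<omega>)\<^sup>2)"
    and r: "r > 0"
  shows "(\<integral>\<omega>. \<bar>Y \<omega>\<bar> \<partial>P) \<le> r / 2 + (\<integral>\<omega>. (Y \<omega>)\<^sup>2 \<partial>P) / (2 * r)"
proof -
  interpret prob_space P by (rule P)
  have "(\<integral>\<omega>. \<bar>Y \<omega>\<bar> \<partial>P) \<le> (\<integral>\<omega>. r / 2 + (Y \<omega>)\<^sup>2 / (2 * r) \<partial>P)"
    using iA iS abs_le_quad[OF r] by (intro integral_mono) auto
  also have "\<dots> = r / 2 + (\<integral>\<omega>. (Y \<omega>)\<^sup>2 \<partial>P) / (2 * r)"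
    using iS by (simp add: prob_space)
  finally show ?thesis .
qed

lemma group_sum:
  fixes t :: "'i \<Rightarrow> real" and G :: "'g \<Rightarrow> real"
  assumes I: "finite I" and A: "finite A" "f ` I \<subseteq> A"
  shows "(\<Sum>g\<in>A. (\<Sum>i\<in>{i\<in>I. f i = g}. t i) * G g) = (\<Sum>i\<in>I. t i * G (f i))"
proof -
  have "(\<Sum>g\<in>A. (\<Sum>i\<in>{i\<in>I. f i = g}. t i) * G g) = (\<Sum>g\<in>A. \<Sum>i\<in>I. if f i = g then t i * G g else 0)"
  proof (intro sum.cong refl)
    fix g
    show "(\<Sum>i\<in>{i\<in>I. f i = g}. t i) * G g = (\<Sum>i\<in>I. if f i = g then t i * G g else 0)"
      by (subst sum_distrib_right) (simp add: sum.inter_filter[OF I, symmetric])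
  qed
  also have "\<dots> = (\<Sum>i\<in>I. \<Sum>g\<in>A. if f i = g then t i * G g else 0)" by (rule sum.swap)
  also have "\<dots> = (\<Sum>i\<in>I. t i * G (f i))"
    using A by (intro sum.cong refl) (auto simp: sum.delta)
  finally show ?thesis .
qed


lemma comb_sum:
  fixes \<phi> :: "'m::finite \<Rightarrow> 'x" and t :: "real^'m" and G :: "'x \<Rightarrow> real"
  shows "(\<Sum>g\<in>range \<phi> \<union> {\<psi>}. (\<sigma> * (\<Sum>i\<in>{i\<in>UNIV. \<phi> i = g}. t$i) - (if g = \<psi> then \<sigma> else 0)) * G g)
       = \<sigma> * (\<Sum>i\<in>UNIV. t$i * G (\<phi> i)) - \<sigma> * G \<psi>"
proof -
  define F where "F = range \<phi> \<union> {\<psi>}"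
  have fF: "finite F" unfolding F_def by simp
  have "(\<Sum>g\<in>F. (\<sigma> * (\<Sum>i\<in>{i\<in>UNIV. \<phi> i = g}. t$i) - (if g = \<psi> then \<sigma> else 0)) * G g)
      = (\<Sum>g\<in>F. \<sigma> * ((\<Sum>i\<in>{i\<in>UNIV. \<phi> i = g}. t$i) * G g)) - (\<Sum>g\<in>F. (if g = \<psi> then \<sigma> else 0) * G g)"
    by (simp add: left_diff_distrib sum_subtractf mult.assoc)
  also have "(\<Sum>g\<in>F. \<sigma> * ((\<Sum>i\<in>{i\<in>UNIV. \<phi> i = g}. t$i) * G g)) = \<sigma> * (\<Sum>i\<in>UNIV. t$i * G (\<phi> i))"
  proof -
    have "(\<Sum>g\<in>F. (\<Sum>i\<in>{i\<in>UNIV. \<phi> i = g}. t$i) * G g) = (\<Sum>i\<in>UNIV. t$i * G (\<phi> i))"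
      by (rule group_sum) (auto simp: fF F_def)
    then show ?thesis by (simp add: sum_distrib_left[symmetric])
  qed
  also have "(\<Sum>g\<in>F. (if g = \<psi> then \<sigma> else 0) * G g) = \<sigma> * G \<psi>"
  proof -
    have "(\<Sum>g\<in>F. (if g = \<psi> then \<sigma> else 0) * G g) = (\<Sum>g\<in>F. if g = \<psi> then \<sigma> * G g else 0)"
      by (intro sum.cong) auto
    also have "\<dots> = \<sigma> * G \<psi>" using fF by (simp add: sum.delta F_def)
    finally show ?thesis .
  qed
  finally show ?thesis unfolding F_def .
qed

lemma v_sum:
  fixes F :: "(real^'d \<Rightarrow> real) set"
  assumes fF: "finite F" and FC: "F \<subseteq> pwC"
  shows "(\<Sum>g\<in>F. \<Sum>g'\<in>F. c g * c g' * L2_inner g g') = (\<integral>x. (\<Sum>g\<in>F. c g * g x)\<^sup>2 \<partial>lebesgue)"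
proof -
  have ip: "integrable lebesgue (\<lambda>x. g x * g' x)" if "g \<in> F" "g' \<in> F" for g g'
    using that FC by (intro pwC_integrable pwC_mult) auto
  have "(\<integral>x. (\<Sum>g\<in>F. c g * g x)\<^sup>2 \<partial>lebesgue) = (\<integral>x. (\<Sum>g\<in>F. \<Sum>g'\<in>F. c g * c g' * (g x * g' x)) \<partial>lebesgue)"
    by (simp add: power2_eq_square sum_product algebra_simps)
  also have "\<dots> = (\<Sum>g\<in>F. \<Sum>g'\<in>F. c g * c g' * (\<integral>x. g x * g' x \<partial>lebesgue))"
    using ip by (simp add: Bochner_Integration.integral_sum integrable_sum)
  finally show ?thesis by (simp add: L2_inner_def)
qed

theorem lemma2p5:
  fixes M :: "'a measure" and \<zeta> :: "int^'d \<Rightarrow> 'a \<Rightarrow> real"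
    and N :: "'w measure" and W :: "(real^'d \<Rightarrow> real) \<Rightarrow> 'w \<Rightarrow> real"
    and D :: "(real^'d \<Rightarrow> real) set" and \<sigma> :: real
  assumes "prob_space M"
    and "\<And>k. \<zeta> k \<in> borel_measurable M"
    and "stationary_field M \<zeta>"
    and "integrable M (\<lambda>\<omega>. (\<zeta> 0 \<omega>)\<^sup>2)"
    and "prob_space.expectation M (\<zeta> 0) = 0"
    and "(\<lambda>k. \<bar>covariance M (\<zeta> 0) (\<zeta> k)\<bar>) summable_on UNIV"
    and "\<sigma> = sqrt (\<Sum>\<^sub>\<infinity>k. covariance M (\<zeta> 0) (\<zeta> k))"
    and "isonormal N W"
    and "L2_dense_in D pwC"
    and "\<And>\<psi>. \<psi> \<in> D \<Longrightarrow>
           conv_distr (\<lambda>n. distr M borel (S \<zeta> n \<psi>)) (distr N borel (\<lambda>\<omega>. \<sigma> * W \<psi> \<omega>))"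
  shows "\<And>\<phi> :: 'm::finite \<Rightarrow> real^'d \<Rightarrow> real. (\<And>i. \<phi> i \<in> pwC) \<Longrightarrow>
           conv_distr (\<lambda>n. distr M borel (\<lambda>\<omega>. \<chi> i. S \<zeta> n (\<phi> i) \<omega>))
                      (distr N borel (\<lambda>\<omega>. \<chi> i. \<sigma> * W (\<phi> i) \<omega>))"
proof -
  note M = assms(1) and m\<zeta> = assms(2) and st = assms(3) and sq0 = assms(4) and E0 = assms(5)
    and sumc = assms(6) and iso = assms(8) and dense = assms(9) and hypD = assms(10)
  fix \<phi> :: "'m::finite \<Rightarrow> real^'d \<Rightarrow> real"
  assume \<phi>: "\<And>i. \<phi> i \<in> pwC"
  interpret Mp: prob_space M by (rule M)
  have N: "prob_space N" using iso unfolding isonormal_def by blast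
  interpret Np: prob_space N by (rule N)
  have mW: "\<And>g. g \<in> L2 \<Longrightarrow> W g \<in> borel_measurable N" using iso unfolding isonormal_def by blast
  have isoD: "\<And>F c. finite F \<Longrightarrow> F \<subseteq> L2 \<Longrightarrow> distr N borel (\<lambda>\<omega>. \<Sum>g\<in>F. c g * W g \<omega>)
          = centered_gaussian (\<Sum>g\<in>F. \<Sum>g'\<in>F. c g * c g' * L2_inner g g')"
    using iso unfolding isonormal_def by blast
  have DC: "D \<subseteq> pwC" and dens: "\<And>f e. f \<in> pwC \<Longrightarrow> e > 0 \<Longrightarrow> \<exists>\<psi>\<in>D. L2_dist f \<psi> < e"
    using dense unfolding L2_dense_in_def by auto
  define Xn where "Xn n \<omega> = (\<chi> i. S \<zeta> n (\<phi> i) \<omega>)" for n \<omega>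
  define X where "X \<omega> = (\<chi> i. \<sigma> * W (\<phi> i) \<omega>)" for \<omega>
  have mS: "\<And>n g. S \<zeta> n g \<in> borel_measurable M" using m\<zeta> by (rule S_meas)
  have mXn: "Xn n \<in> borel_measurable M" for n
  proof (rule borel_measurable_euclidean_space[THEN iffD2], intro ballI)
    fix b :: "real^'m" assume "b \<in> Basis"
    then obtain i where b: "b = axis i 1" unfolding Basis_vec_def by auto
    show "(\<lambda>\<omega>. Xn n \<omega> \<bullet> b) \<in> borel_measurable M"
      unfolding b Xn_def using mS by (simp add: inner_axis)
  qed
  have mWphi: "W (\<phi> i) \<in> borel_measurable N" for i using mW pwC_L2 \<phi> by blast
  have mX: "X \<in> borel_measurable N"
  proof (rule borel_measurable_euclidean_space[THEN iffD2], intro ballI)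
    fix b :: "real^'m" assume "b \<in> Basis"
    then obtain i where b: "b = axis i 1" unfolding Basis_vec_def by auto
    show "(\<lambda>\<omega>. X \<omega> \<bullet> b) \<in> borel_measurable N"
      unfolding b X_def using mWphi by (simp add: inner_axis)
  qed
  have H: "(\<lambda>n. \<integral>\<omega>. g (t \<bullet> Xn n \<omega>) \<partial>M) \<longlonglongrightarrow> (\<integral>\<omega>. g (t \<bullet> X \<omega>) \<partial>N)"
    if cg: "continuous_on UNIV g" and bg: "bounded (range g)" for t and g :: "real \<Rightarrow> real"
  proof -
    define \<Phi>t where "\<Phi>t x = (\<Sum>i\<in>UNIV. t$i * \<phi> i x)" for x
    have \<Phi>p: "\<Phi>t \<in> pwC"
    proof -
      have "(\<lambda>x. \<Sum>i\<in>UNIV. (\<lambda>i x. t$i * \<phi> i x) i x) \<in> pwC"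
        by (rule pwC_sum) (auto intro: pwC_const_mult \<phi>)
      then show ?thesis by (simp add: \<Phi>t_def[abs_def])
    qed
    define Rn where "Rn n \<omega> = t \<bullet> Xn n \<omega>" for n \<omega>
    define U where "U \<omega> = t \<bullet> X \<omega>" for \<omega>
    have Rn_eq: "Rn n \<omega> = S \<zeta> n \<Phi>t \<omega>" for n \<omega>
    proof -
      have "Rn n \<omega> = (\<Sum>i\<in>UNIV. t$i * S \<zeta> n (\<phi> i) \<omega>)"
        by (simp add: Rn_def Xn_def inner_vec_def)
      also have "\<dots> = S \<zeta> n (\<lambda>x. \<Sum>i\<in>UNIV. t$i * \<phi> i x) \<omega>"
        by (rule S_lin[symmetric]) (auto intro: \<phi>)
      finally show ?thesis by (simp add: \<Phi>t_def[abs_def])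
    qed
    have U_eq: "U \<omega> = \<sigma> * (\<Sum>i\<in>UNIV. t$i * W (\<phi> i) \<omega>)" for \<omega>
      by (simp add: U_def X_def inner_vec_def sum_distrib_left algebra_simps)
    have mRn: "Rn n \<in> borel_measurable M" for n
      unfolding Rn_eq[abs_def] using mS by simp
    have mU: "U \<in> borel_measurable N"
      unfolding U_eq[abs_def] using mWphi by measurable
    have "(\<lambda>n. \<integral>\<omega>. g (Rn n \<omega>) \<partial>M) \<longlonglongrightarrow> (\<integral>\<omega>. g (U \<omega>) \<partial>N)"
    proof (rule approx_conv[OF M N mRn mU _ cg bg])
      fix \<delta> :: real assume \<delta>: "\<delta> > 0"
      define C where "C = Cc M \<zeta>"
      have C0: "C \<ge> 0" unfolding C_def by (rule Cc_nonneg[OF M m\<zeta> st sq0 E0 sumc])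
      define \<rho> where "\<rho> = \<delta>\<^sup>2 / (2 * (C + \<sigma>\<^sup>2 + 1))"
      have den: "2 * (C + \<sigma>\<^sup>2 + 1) > 0" using C0 by (simp add: add_nonneg_pos)
      have \<rho>0: "\<rho> > 0" unfolding \<rho>_def using \<delta> den by simp
      have C\<rho>: "C * \<rho> \<le> \<delta>\<^sup>2 / 2" and s\<rho>: "\<sigma>\<^sup>2 * \<rho> \<le> \<delta>\<^sup>2 / 2"
      proof -
        have "C * \<rho> = \<delta>\<^sup>2 / 2 * (C / (C + \<sigma>\<^sup>2 + 1))" unfolding \<rho>_def by (simp add: field_simps)
        also have "\<dots> \<le> \<delta>\<^sup>2 / 2 * 1" using C0 by (intro mult_left_mono) (auto simp: divide_le_eq add_nonneg_pos)
        finally show "C * \<rho> \<le> \<delta>\<^sup>2 / 2" by simp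
        have "\<sigma>\<^sup>2 * \<rho> = \<delta>\<^sup>2 / 2 * (\<sigma>\<^sup>2 / (C + \<sigma>\<^sup>2 + 1))" unfolding \<rho>_def by (simp add: field_simps)
        also have "\<dots> \<le> \<delta>\<^sup>2 / 2 * 1" using C0 by (intro mult_left_mono) (auto simp: divide_le_eq add_nonneg_pos)
        finally show "\<sigma>\<^sup>2 * \<rho> \<le> \<delta>\<^sup>2 / 2" by simp
      qed
      obtain \<psi> where \<psi>D: "\<psi> \<in> D" and d\<psi>: "L2_dist \<Phi>t \<psi> < sqrt \<rho>"
        using dens[OF \<Phi>p, of "sqrt \<rho>"] \<rho>0 by auto
      have \<psi>p: "\<psi> \<in> pwC" using DC \<psi>D by blast
      define h where "h x = \<Phi>t x - \<psi> x" for x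
      have hp: "h \<in> pwC" unfolding h_def[abs_def] by (rule pwC_diff[OF \<Phi>p \<psi>p])
      have h2p: "(\<lambda>x. (h x)\<^sup>2) \<in> pwC" using pwC_mult[OF hp hp] by (simp add: power2_eq_square)
      have Ih: "(\<integral>x. (h x)\<^sup>2 \<partial>lebesgue) < \<rho>"
      proof -
        have "sqrt (\<integral>x. (h x)\<^sup>2 \<partial>lebesgue) < sqrt \<rho>" using d\<psi> by (simp add: L2_dist_def h_def)
        then show ?thesis by simp
      qed
      have Ih0: "(\<integral>x. (h x)\<^sup>2 \<partial>lebesgue) \<ge> 0" by (intro integral_nonneg_AE) auto
      define Vn where "Vn n = S \<zeta> n \<psi>" for n
      define V where "V \<omega> = \<sigma> * W \<psi> \<omega>" for \<omega>
      have diffS: "Rn n \<omega> - Vn n \<omega> = S \<zeta> n h \<omega>" for n \<omega>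
        unfolding Rn_eq Vn_def h_def[abs_def] by (rule S_diff[OF \<Phi>p \<psi>p, symmetric])
      have mVn: "\<forall>n. Vn n \<in> borel_measurable M" unfolding Vn_def using mS by simp
      have mW\<psi>: "W \<psi> \<in> borel_measurable N" using mW pwC_L2[OF \<psi>p] by blast
      have mV: "V \<in> borel_measurable N" unfolding V_def[abs_def] using mW\<psi> by measurable
      have cV: "\<forall>g::real\<Rightarrow>real. continuous_on UNIV g \<and> bounded (range g) \<longrightarrow>
          (\<lambda>n. \<integral>\<omega>. g (Vn n \<omega>) \<partial>M) \<longlonglongrightarrow> (\<integral>\<omega>. g (V \<omega>) \<partial>N)"
      proof (intro allI impI, elim conjE)
        fix g :: "real \<Rightarrow> real" assume cg': "continuous_on UNIV g" and bg': "bounded (range g)"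
        have mg: "g \<in> borel_measurable borel" using cg' by (rule borel_measurable_continuous_onI)
        have "(\<lambda>n. integral\<^sup>L (distr M borel (S \<zeta> n \<psi>)) g) \<longlonglongrightarrow> integral\<^sup>L (distr N borel (\<lambda>\<omega>. \<sigma> * W \<psi> \<omega>)) g"
          using hypD[OF \<psi>D] cg' bg' unfolding conv_distr_def by blast
        then show "(\<lambda>n. \<integral>\<omega>. g (Vn n \<omega>) \<partial>M) \<longlonglongrightarrow> (\<integral>\<omega>. g (V \<omega>) \<partial>N)"
          using mS mV mg unfolding Vn_def V_def[abs_def] by (simp add: integral_distr)
      qed
      have iS: "integrable M (\<lambda>\<omega>. (S \<zeta> n h \<omega>)\<^sup>2) \<and> integrable M (\<lambda>\<omega>. \<bar>S \<zeta> n h \<omega>\<bar>)" for n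
      proof (cases "n = 0")
        case True then show ?thesis by (simp add: S_zero_n)
      next
        case False
        have i2: "integrable M (\<lambda>\<omega>. (S \<zeta> n h \<omega>)\<^sup>2)"
          using second_moment(1)[OF M m\<zeta> st sq0 E0 sumc hp] False by simp
        have "integrable M (S \<zeta> n h)" by (rule Mp.square_integrable_imp_integrable[OF mS i2])
        then show ?thesis using i2 by simp
      qed
      have iMn: "\<forall>n. integrable M (\<lambda>\<omega>. \<bar>Rn n \<omega> - Vn n \<omega>\<bar>)" unfolding diffS using iS by simp
      have evM: "eventually (\<lambda>n. (\<integral>\<omega>. \<bar>Rn n \<omega> - Vn n \<omega>\<bar> \<partial>M) \<le> \<delta>) sequentially"
      proof -
        define Rs where "Rs n = (\<Sum>k\<in>supp n h. (h (lattice_pt n k))\<^sup>2) / real n ^ CARD('d)" for n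
        have "Rs \<longlonglongrightarrow> (\<integral>x. (h x)\<^sup>2 \<partial>lebesgue)"
        proof -
          have "supp n (\<lambda>x. (h x)\<^sup>2) = supp n h" for n by (simp add: supp_def)
          then show ?thesis using riemann[OF h2p] unfolding Rs_def by simp
        qed
        then have ev1: "eventually (\<lambda>n. Rs n < \<rho>) sequentially" using Ih by (rule order_tendstoD(2))
        show ?thesis using ev1 eventually_gt_at_top[of 0]
        proof eventually_elim
          case (elim n)
          have m2: "(\<integral>\<omega>. (S \<zeta> n h \<omega>)\<^sup>2 \<partial>M) \<le> C * Rs n"
            using second_moment(2)[OF M m\<zeta> st sq0 E0 sumc hp elim(2)] unfolding C_def Rs_def .
          also have "\<dots> \<le> C * \<rho>" using C0 elim(1) by (intro mult_left_mono) auto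
          also have "\<dots> \<le> \<delta>\<^sup>2 / 2" by (rule C\<rho>)
          finally have m2': "(\<integral>\<omega>. (S \<zeta> n h \<omega>)\<^sup>2 \<partial>M) \<le> \<delta>\<^sup>2 / 2" .
          have "(\<integral>\<omega>. \<bar>S \<zeta> n h \<omega>\<bar> \<partial>M) \<le> \<delta> / 2 + (\<integral>\<omega>. (S \<zeta> n h \<omega>)\<^sup>2 \<partial>M) / (2 * \<delta>)"
            using iS[of n] by (intro abs_moment_bound[OF M _ _ \<delta>]) auto
          also have "\<dots> \<le> \<delta> / 2 + (\<delta>\<^sup>2 / 2) / (2 * \<delta>)"
            using m2' \<delta> by (intro add_left_mono divide_right_mono) auto
          also have "\<dots> \<le> \<delta>" using \<delta> by (simp add: power2_eq_square field_simps)
          finally show ?case unfolding diffS .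
        qed
      qed
      define F where "F = range \<phi> \<union> {\<psi>}"
      define c where "c g = \<sigma> * (\<Sum>i\<in>{i\<in>UNIV. \<phi> i = g}. t$i) - (if g = \<psi> then \<sigma> else 0)" for g
      have fF: "finite F" unfolding F_def by simp
      have FC: "F \<subseteq> pwC" unfolding F_def using \<phi> \<psi>p by auto
      have FL: "F \<subseteq> L2" using FC pwC_L2 by blast
      have comb: "(\<Sum>g\<in>F. c g * G g) = \<sigma> * (\<Sum>i\<in>UNIV. t$i * G (\<phi> i)) - \<sigma> * G \<psi>" for G
        unfolding F_def c_def by (rule comb_sum)
      define Y where "Y \<omega> = (\<Sum>g\<in>F. c g * W g \<omega>)" for \<omega>
      have UVY: "U \<omega> - V \<omega> = Y \<omega>" for \<omega>
        unfolding Y_def comb U_eq V_def by simp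
      have hx: "(\<Sum>g\<in>F. c g * g x) = \<sigma> * h x" for x
        unfolding comb h_def \<Phi>t_def by (simp add: algebra_simps)
      define v where "v = (\<Sum>g\<in>F. \<Sum>g'\<in>F. c g * c g' * L2_inner g g')"
      have dY: "distr N borel Y = centered_gaussian v"
        unfolding Y_def[abs_def] v_def by (rule isoD[OF fF FL])
      have v_eq: "v = \<sigma>\<^sup>2 * (\<integral>x. (h x)\<^sup>2 \<partial>lebesgue)"
        unfolding v_def v_sum[OF fF FC] hx by (simp add: power_mult_distrib)
      have v0: "v \<ge> 0" unfolding v_eq using Ih0 by simp
      have mY: "Y \<in> borel_measurable N"
        unfolding Y_def[abs_def] using mW FL by (intro borel_measurable_sum borel_measurable_times) auto
      have iY1: "integrable N (\<lambda>\<omega>. \<bar>Y \<omega>\<bar>)"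
        using gauss_moments(1)[OF v0] integrable_distr_eq[OF mY, of abs] dY by simp
      have iY2: "integrable N (\<lambda>\<omega>. (Y \<omega>)\<^sup>2)"
        using gauss_moments(2)[OF v0] integrable_distr_eq[OF mY, of "\<lambda>z. z\<^sup>2"] dY by simp
      have eY2: "(\<integral>\<omega>. (Y \<omega>)\<^sup>2 \<partial>N) = v"
        using gauss_moments(3)[OF v0] integral_distr[OF mY, of "\<lambda>z. z\<^sup>2"] dY by simp
      have iN: "integrable N (\<lambda>\<omega>. \<bar>U \<omega> - V \<omega>\<bar>)" unfolding UVY by (rule iY1)
      have bN: "(\<integral>\<omega>. \<bar>U \<omega> - V \<omega>\<bar> \<partial>N) \<le> \<delta>"
      proof -
        have "(\<integral>\<omega>. \<bar>Y \<omega>\<bar> \<partial>N) \<le> \<delta> / 2 + (\<integral>\<omega>. (Y \<omega>)\<^sup>2 \<partial>N) / (2 * \<delta>)"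
          by (rule abs_moment_bound[OF N iY1 iY2 \<delta>])
        also have "(\<integral>\<omega>. (Y \<omega>)\<^sup>2 \<partial>N) \<le> \<delta>\<^sup>2 / 2"
        proof -
          have "(\<integral>\<omega>. (Y \<omega>)\<^sup>2 \<partial>N) = \<sigma>\<^sup>2 * (\<integral>x. (h x)\<^sup>2 \<partial>lebesgue)" using eY2 v_eq by simp
          also have "\<dots> \<le> \<sigma>\<^sup>2 * \<rho>" using Ih by (intro mult_left_mono) auto
          also have "\<dots> \<le> \<delta>\<^sup>2 / 2" by (rule s\<rho>)
          finally show ?thesis .
        qed
        then have "\<delta> / 2 + (\<integral>\<omega>. (Y \<omega>)\<^sup>2 \<partial>N) / (2 * \<delta>) \<le> \<delta> / 2 + (\<delta>\<^sup>2 / 2) / (2 * \<delta>)"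
          using \<delta> by (intro add_left_mono divide_right_mono) auto
        also have "\<dots> \<le> \<delta>" using \<delta> by (simp add: power2_eq_square field_simps)
        finally show ?thesis unfolding UVY .
      qed
      show "\<exists>Vn V. (\<forall>n. Vn n \<in> borel_measurable M) \<and> V \<in> borel_measurable N \<and>
       (\<forall>g::real\<Rightarrow>real. continuous_on UNIV g \<and> bounded (range g) \<longrightarrow>
          (\<lambda>n. \<integral>\<omega>. g (Vn n \<omega>) \<partial>M) \<longlonglongrightarrow> (\<integral>\<omega>. g (V \<omega>) \<partial>N)) \<and>
       (\<forall>n. integrable M (\<lambda>\<omega>. \<bar>Rn n \<omega> - Vn n \<omega>\<bar>)) \<and>
       eventually (\<lambda>n. (\<integral>\<omega>. \<bar>Rn n \<omega> - Vn n \<omega>\<bar> \<partial>M) \<le> \<delta>) sequentially \<and>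
       integrable N (\<lambda>\<omega>. \<bar>U \<omega> - V \<omega>\<bar>) \<and> (\<integral>\<omega>. \<bar>U \<omega> - V \<omega>\<bar> \<partial>N) \<le> \<delta>"
        using mVn mV cV iMn evM iN bN by blast
    qed
    then show ?thesis by (simp add: Rn_def U_def)
  qed
  show "conv_distr (\<lambda>n. distr M borel (\<lambda>\<omega>. \<chi> i. S \<zeta> n (\<phi> i) \<omega>)) (distr N borel (\<lambda>\<omega>. \<chi> i. \<sigma> * W (\<phi> i) \<omega>))"
    unfolding conv_distr_def
  proof (intro allI impI, elim conjE)
    fix f :: "real^'m \<Rightarrow> real"
    assume cf: "continuous_on UNIV f" and bf: "bounded (range f)"
    obtain B where B: "\<And>x. \<bar>f x\<bar> \<le> B" using bf unfolding bounded_iff by auto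
    have mf: "f \<in> borel_measurable borel" using cf by (rule borel_measurable_continuous_onI)
    have "(\<lambda>n. \<integral>\<omega>. f (Xn n \<omega>) \<partial>M) \<longlonglongrightarrow> (\<integral>\<omega>. f (X \<omega>) \<partial>N)"
      by (rule cw_main[OF M N mXn mX H cf B])
    then show "(\<lambda>n. integral\<^sup>L (distr M borel (\<lambda>\<omega>. \<chi> i. S \<zeta> n (\<phi> i) \<omega>)) f) \<longlonglongrightarrow>
               integral\<^sup>L (distr N borel (\<lambda>\<omega>. \<chi> i. \<sigma> * W (\<phi> i) \<omega>)) f"
      using mXn mX mf unfolding Xn_def[abs_def] X_def[abs_def] by (simp add: integral_distr)
  qed
qed


end
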